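(* Let $\theta^*\in\mathbb{R}$ and $c>0$. Consider the Dirichlet process mixture model with uniform kernel $k(x\mid\theta)=(2c)^{-1}\mathbb{1}_{(\theta-c,\theta+c)}(x)$, base density $q_0$ equal to the uniform density on $(\theta^*-c,\theta^*+c)$, and prior $\pi$ on the concentration parameter satisfying A1, A2 and A3 with some $\rho\ge38$. Let $X_1,X_2,\dots$ be i.i.d. $\mathrm{Unif}(\theta^*-c,\theta^*+c)$, with joint law $P^{(\infty)}$. Then $\mathrm{pr}(K_n=1\mid X_{1:n})\to1$ in $P^{(\infty)}$-probability as $n\to\infty$.
   Context: Model: $\alpha\sim\pi$, $\tilde P\mid\alpha\sim\mathrm{DP}(\alpha,Q_0)$ with $Q_0$ having density $q_0$, $\theta_i\mid\tilde P$ i.i.d. $\tilde P$, $X_i\mid\theta_i\sim k(\cdot\mid\theta_i)$ independently. $K_n$ is the number of distinct values among $\theta_1,\dots,\theta_n$. With $\tau_s(n)$ the set of partitions of $\{1,\dots,n\}$ into $s$ nonempty blocks $A_1,\dots,A_s$, $a_j=|A_j|$, $\alpha^{(n)}=\alpha(\alpha+1)\cdots(\alpha+n-1)$, and $m(x_B)=\int\prod_{i\in B}k(x_i\mid\theta)q_0(\theta)d\theta$, the posterior is $\mathrm{pr}(K_n=s\mid X_{1:n})=W_s/\sum_{r=1}^nW_r$ with $W_s=\int_0^\infty\frac{\alpha^s}{\alpha^{(n)}}\pi(d\alpha)\sum_{A\in\tau_s(n)}\prod_j(a_j-1)!\,m(X_{A_j})$. (A1) $\pi$ has a Lebesgue density,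 also denoted $\pi$; (A2) there exist $\epsilon,\delta,\beta$ with $\frac1\delta\alpha^\beta\le\pi(\alpha)\le\delta\alpha^\beta$ for all $\alpha\in(0,\epsilon)$; (A3) there exist $D,\nu,\rho>0$ with $\int\alpha^s\pi(\alpha)d\alpha<D\rho^{-s}\Gamma(\nu+s+1)$ for every integer $s\ge1$. *)

theory Defs
  imports "HOL-Probability.Probability"
begin

text \<open>Set partitions of the index set {0..<n} (representing {1,...,n}) into exactly s nonempty blocks.\<close>
definition set_partitions_k :: "nat \<Rightarrow> nat \<Rightarrow> nat set set set" where
  "set_partitions_k n s = {A. partition_on {..<n} A \<and> card A = s}"

definition dpm_m :: "(real \<Rightarrow> real \<Rightarrow> real) \<Rightarrow> (real \<Rightarrow> real) \<Rightarrow> (nat \<Rightarrow> real) \<Rightarrow> nat set \<Rightarrow> real" where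
  "dpm_m k q0 x B = (LINT \<theta>|lborel. (\<Prod>i\<in>B. k (x i) \<theta>) * q0 \<theta>)"

definition dpm_W :: "(real \<Rightarrow> real) \<Rightarrow> (real \<Rightarrow> real \<Rightarrow> real) \<Rightarrow> (real \<Rightarrow> real) \<Rightarrow> nat \<Rightarrow> (nat \<Rightarrow> real) \<Rightarrow> nat \<Rightarrow> real" where
  "dpm_W prior k q0 n x s =
     (LINT \<alpha>:{0<..}|lborel. \<alpha> ^ s / pochhammer \<alpha> n * prior \<alpha>) *
     (\<Sum>A\<in>set_partitions_k n s. \<Prod>B\<in>A. fact (card B - 1) * dpm_m k q0 x B)"

text \<open>Posterior pr(K_n = s | X_{1:n}) = W_s / sum_{r=1}^n W_r.\<close>
definition dpm_post :: "(real \<Rightarrow> real) \<Rightarrow> (real \<Rightarrow> real \<Rightarrow> real) \<Rightarrow> (real \<Rightarrow> real) \<Rightarrow> nat \<Rightarrow> (nat \<Rightarrow> real) \<Rightarrow> nat \<Rightarrow> real" where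
  "dpm_post prior k q0 n x s = dpm_W prior k q0 n x s / (\<Sum>r=1..n. dpm_W prior k q0 n x r)"

definition unif_kernel :: "real \<Rightarrow> real \<Rightarrow> real \<Rightarrow> real" where
  "unif_kernel c x \<theta> = indicator {\<theta> - c<..<\<theta> + c} x / (2 * c)"

definition unif_dens :: "real \<Rightarrow> real \<Rightarrow> real \<Rightarrow> real" where
  "unif_dens a c t = indicator {a - c<..<a + c} t / (2 * c)"

end

theory Submission
  imports Defs
begin

definition parts :: "'a set \<Rightarrow> nat \<Rightarrow> 'a set set set" where
  "parts S s = {A. partition_on S A \<and> card A = s}"

definition Phi :: "(nat \<Rightarrow> real) \<Rightarrow> nat \<Rightarrow> 'a set \<Rightarrow> real" where
  "Phi w s S = (\<Sum>A\<in>parts S s. \<Prod>B\<in>A. w (card B))"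

lemma finite_parts: "finite S \<Longrightarrow> finite (parts S s)"
  by (rule finite_subset[of _ "Pow (Pow S)"]) (auto simp: parts_def partition_on_def)

lemma partition_on_finite: "finite S \<Longrightarrow> partition_on S A \<Longrightarrow> finite A"
  by (rule finite_subset[of _ "Pow S"]) (auto simp: partition_on_def)

lemma partition_remove:
  assumes "partition_on S A" "B \<in> A"
  shows "partition_on (S - B) (A - {B})"
proof -
  have "A = insert B (A - {B})" using assms by auto
  moreover have "disjnt B (\<Union>(A - {B}))"
    using assms by (auto simp: partition_on_def disjoint_def disjnt_def)
  ultimately show ?thesis using assms partition_on_insert[of B "A - {B}" S] by metis
qed

lemma partition_add:
  assumes "partition_on (S - B) A'" "B \<subseteq> S" "B \<noteq> {}"
  shows "partition_on S (insert B A')" "B \<notin> A'"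
proof -
  have d: "disjnt B (\<Union>A')" using assms by (auto simp: partition_on_def disjnt_def)
  then show "partition_on S (insert B A')" using assms partition_on_insert[of B A' S] by simp
  show "B \<notin> A'" using assms d by (auto simp: disjnt_def)
qed

lemma Phi_rec:
  assumes S: "finite S" and s: "s \<ge> 1"
  shows "real s * Phi w s S = (\<Sum>B\<in>Pow S - {{}}. w (card B) * Phi w (s - 1) (S - B))"
proof -
  have "real s * Phi w s S = (\<Sum>A\<in>parts S s. \<Sum>B\<in>A. w (card B) * (\<Prod>B'\<in>A - {B}. w (card B')))"
    unfolding Phi_def sum_distrib_left
  proof (rule sum.cong[OF refl])
    fix A assume A: "A \<in> parts S s"
    then have fA: "finite A" and cA: "card A = s" using S partition_on_finite by (auto simp: parts_def)
    have "(\<Sum>B\<in>A. w (card B) * (\<Prod>B'\<in>A - {B}. w (card B'))) = (\<Sum>B\<in>A. (\<Prod>B\<in>A. w (card B)))"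
      by (rule sum.cong[OF refl]) (simp add: prod.remove[OF fA])
    also have "\<dots> = real s * (\<Prod>B\<in>A. w (card B))" using cA by simp
    finally show "real s * (\<Prod>B\<in>A. w (card B)) = (\<Sum>B\<in>A. w (card B) * (\<Prod>B'\<in>A - {B}. w (card B')))" ..
  qed
  also have "\<dots> = (\<Sum>(A,B)\<in>Sigma (parts S s) (\<lambda>A. A). w (card B) * (\<Prod>B'\<in>A - {B}. w (card B')))"
    by (rule sum.Sigma) (use S finite_parts partition_on_finite in \<open>auto simp: parts_def\<close>)
  also have "\<dots> = (\<Sum>(B,A')\<in>Sigma (Pow S - {{}}) (\<lambda>B. parts (S - B) (s - 1)). w (card B) * (\<Prod>B'\<in>A'. w (card B')))"
  proof (rule sum.reindex_bij_witness[where i = "\<lambda>(B,A'). (insert B A', B)" and j = "\<lambda>(A,B). (B, A - {B})"])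
    fix a assume "a \<in> Sigma (parts S s) (\<lambda>A. A)"
    then obtain A B where a: "a = (A,B)" "partition_on S A" "card A = s" "B \<in> A" by (auto simp: parts_def)
    then show "(case case a of (A, B) \<Rightarrow> (B, A - {B}) of (B, A') \<Rightarrow> (insert B A', B)) = a" by auto
    have fA: "finite A" using a S partition_on_finite by auto
    show "(case a of (A, B) \<Rightarrow> (B, A - {B})) \<in> Sigma (Pow S - {{}}) (\<lambda>B. parts (S - B) (s - 1))"
      using a partition_remove[of S A B] fA by (auto simp: parts_def partition_on_def)
    show "(case case a of (A, B) \<Rightarrow> (B, A - {B}) of (B, A') \<Rightarrow> w (card B) * (\<Prod>B'\<in>A'. w (card B'))) =
         (case a of (A, B) \<Rightarrow> w (card B) * (\<Prod>B'\<in>A - {B}. w (card B')))" using a by simp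
  next
    fix b assume "b \<in> Sigma (Pow S - {{}}) (\<lambda>B. parts (S - B) (s - 1))"
    then obtain B A' where b: "b = (B,A')" "B \<subseteq> S" "B \<noteq> {}" "partition_on (S - B) A'" "card A' = s - 1"
      by (auto simp: parts_def)
    have fA': "finite A'" using b S by (intro partition_on_finite[of "S - B"]) auto
    note pa = partition_add[OF b(4) b(2) b(3)]
    show "(case case b of (B, A') \<Rightarrow> (insert B A', B) of (A, B) \<Rightarrow> (B, A - {B})) = b" using b pa by auto
    show "(case b of (B, A') \<Rightarrow> (insert B A', B)) \<in> Sigma (parts S s) (\<lambda>A. A)"
      using b pa fA' s by (auto simp: parts_def)
  qed
  also have "\<dots> = (\<Sum>B\<in>Pow S - {{}}. \<Sum>A'\<in>parts (S - B) (s - 1). w (card B) * (\<Prod>B'\<in>A'. w (card B')))"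
    by (rule sum.Sigma[symmetric]) (use S in \<open>auto intro: finite_parts\<close>)
  also have "\<dots> = (\<Sum>B\<in>Pow S - {{}}. w (card B) * Phi w (s - 1) (S - B))"
    by (simp add: Phi_def sum_distrib_left)
  finally show ?thesis .
qed

lemma sum_inv_sq_le: "(\<Sum>k=1..N. 1 / (real k)^2) \<le> 2 - 1 / real (max N 1)"
proof (induction N)
  case 0 then show ?case by simp
next
  case (Suc N)
  show ?case
  proof (cases "N = 0")
    case True then show ?thesis by simp
  next
    case False
    have "(\<Sum>k=1..Suc N. 1 / (real k)^2) = (\<Sum>k=1..N. 1 / (real k)^2) + 1 / (real (Suc N))^2" by simp
    also have "\<dots> \<le> 2 - 1 / real N + 1 / (real (Suc N))^2" using Suc False by simp
    also have "\<dots> \<le> 2 - 1 / real (Suc N)"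
    proof -
      have "1 / (real (Suc N))^2 \<le> 1 / (real N * real (Suc N))"
        using False by (intro divide_left_mono) (auto simp: power2_eq_square)
      also have "\<dots> = 1 / real N - 1 / real (Suc N)"
        using False by (simp add: field_simps)
      finally have "1 / (real (Suc N))^2 \<le> 1 / real N - 1 / real (Suc N)" .
      then show ?thesis by simp
    qed
    finally show ?thesis by simp
  qed
qed

lemma sum_inv_sq_le2: "(\<Sum>k=1..N. 1 / (real k)^2) \<le> 2"
  using sum_inv_sq_le[of N] by (smt (verit) divide_nonneg_nonneg of_nat_0_le_iff)

lemma ab_ineq:
  fixes a b :: real assumes ap: "a > 0" "b > 0"
  shows "1 / (a^2 * b^2) \<le> (2 / a^2 + 2 / b^2) / (a + b)^2"
proof -
  have "1/a + 1/b = (a + b) / (a * b)" using ap by (simp add: field_simps)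
  then have "(1/a + 1/b)^2 / (a + b)^2 = ((a + b) / (a * b))^2 / (a + b)^2" by (simp only:)
  also have "\<dots> = 1 / (a^2 * b^2)"
  proof -
    have "(a + b)^2 \<noteq> 0" using ap by simp
    then show ?thesis by (simp add: power_divide power_mult_distrib)
  qed
  finally have e: "1 / (a^2 * b^2) = (1/a + 1/b)^2 / (a + b)^2" by (simp only:)
  have "(1/a + 1/b)^2 \<le> 2 * (1/a)^2 + 2 * (1/b)^2"
    by (smt (verit) power2_sum sum_squares_bound)
  then have "(1/a + 1/b)^2 \<le> 2 / a^2 + 2 / b^2" by (simp add: power_divide)
  then show ?thesis unfolding e by (rule divide_right_mono) simp
qed

lemma conv_bound:
  assumes "m \<ge> 1"
  shows "(\<Sum>k=1..m-1. 1 / ((real k)^2 * (real (m - k))^2)) \<le> 8 / (real m)^2"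
proof -
  have "(\<Sum>k=1..m-1. 1 / ((real k)^2 * (real (m - k))^2))
      \<le> (\<Sum>k=1..m-1. (2 / (real k)^2 + 2 / (real (m - k))^2) / (real m)^2)"
  proof (rule sum_mono)
    fix k assume k: "k \<in> {1..m-1}"
    then have kp: "real k > 0" "real (m - k) > 0" and mk: "real k + real (m - k) = real m" by auto
    show "1 / ((real k)^2 * (real (m - k))^2) \<le> (2 / (real k)^2 + 2 / (real (m - k))^2) / (real m)^2"
      using ab_ineq[OF kp] unfolding mk .
  qed
  also have "\<dots> = (2 * (\<Sum>k=1..m-1. 1 / (real k)^2) + 2 * (\<Sum>k=1..m-1. 1 / (real (m - k))^2)) / (real m)^2"
    by (simp add: sum_divide_distrib[symmetric] sum.distrib sum_distrib_left)
  also have "(\<Sum>k=1..m-1. 1 / (real (m - k))^2) = (\<Sum>k=1..m-1. 1 / (real k)^2)"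
    by (rule sum.reindex_bij_witness[where i = "\<lambda>k. m - k" and j = "\<lambda>k. m - k"]) auto
  also have "(2 * (\<Sum>k=1..m-1. 1 / (real k)^2) + 2 * (\<Sum>k=1..m-1. 1 / (real k)^2)) / (real m)^2 \<le> 8 / (real m)^2"
    using sum_inv_sq_le2[of "m-1"] by (intro divide_right_mono) auto
  finally show ?thesis .
qed

definition wt :: "nat \<Rightarrow> real" where "wt a = fact (a - 1) * (2 / (real a + 1))"
definition bnd :: "nat \<Rightarrow> nat \<Rightarrow> real" where
  "bnd s m = fact m * 2 * 16^(s-1) / (fact s * (real m)^2)"

lemma wt_nonneg: "wt a \<ge> 0" by (simp add: wt_def)

lemma Phi_nonneg: "(\<And>a. w a \<ge> 0) \<Longrightarrow> Phi w s S \<ge> 0"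
  unfolding Phi_def by (intro sum_nonneg prod_nonneg) auto

lemma parts_empty: "s \<ge> 1 \<Longrightarrow> parts {} s = {}"
  by (auto simp: parts_def partition_on_empty)

lemma parts_one: "S \<noteq> {} \<Longrightarrow> parts S 1 = {{S}}"
proof (intro equalityI subsetI)
  fix A assume "A \<in> parts S 1"
  then have "partition_on S A" "card A = 1" by (auto simp: parts_def)
  then obtain B where "A = {B}" by (auto simp: card_Suc_eq)
  with \<open>partition_on S A\<close> show "A \<in> {{S}}" by (auto simp: partition_on_def)
next
  fix A assume "A \<in> {{S}}" "S \<noteq> {}" then show "A \<in> parts S 1" by (auto simp: parts_def partition_on_space)
qed

lemma sum_Pow_card:
  assumes "finite S"
  shows "(\<Sum>B\<in>Pow S. g (card B)) = (\<Sum>k\<le>card S. real (card S choose k) * g k)"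
proof -
  have "(\<Sum>B\<in>Pow S. g (card B)) = (\<Sum>k\<in>{..card S}. \<Sum>B\<in>{B\<in>Pow S. card B = k}. g (card B))"
    proof (rule sum.group[symmetric])
    show "card ` Pow S \<subseteq> {..card S}" using assms by (auto intro: card_mono)
  qed (use assms in auto)
  also have "\<dots> = (\<Sum>k\<le>card S. real (card S choose k) * g k)"
  proof (rule sum.cong[OF refl])
    fix k
    have "(\<Sum>B\<in>{B\<in>Pow S. card B = k}. g (card B)) = (\<Sum>B\<in>{B\<in>Pow S. card B = k}. g k)" by simp
    also have "\<dots> = real (card {B\<in>Pow S. card B = k}) * g k" by simp
    also have "{B\<in>Pow S. card B = k} = {B. B \<subseteq> S \<and> card B = k}" by auto
    finally show "(\<Sum>B\<in>{B\<in>Pow S. card B = k}. g (card B)) = real (card S choose k) * g k"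
      using n_subsets[OF assms] by simp
  qed
  finally show ?thesis .
qed

lemma gen_eq1:
  fixes M F G T Fs a b :: real
  assumes "a > 0" "b > 0" "F > 0" "G > 0" "Fs > 0"
  shows "M / ((a * F) * G) * (F * (2 / (a + 1)) * (G * 2 * T / (Fs * b^2))) = M * 4 * T / Fs * (1 / (a * (a + 1) * b^2))"
proof -
  have "a + 1 > 0" using assms by simp
  then show ?thesis using assms by (simp add: divide_simps)
qed

lemma gen_eq2:
  fixes M T Fs x s :: real
  assumes "Fs > 0" "x > 0" "s \<ge> 0"
  shows "M * 4 * T / Fs * (8 / x^2) = (s + 1) * (M * 2 * (16 * T) / ((s + 1) * Fs * x^2))"
proof -
  have "s + 1 > 0" using assms by simp
  then show ?thesis using assms by (simp add: divide_simps)
qed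

lemma term_eq:
  assumes k: "1 \<le> k" "k < m" and s: "s \<ge> 1"
  shows "real (m choose k) * (wt k * bnd s (m - k))
       = fact m * 4 * 16^(s-1) / fact s * (1 / (real k * (real k + 1) * (real (m - k))^2))"
proof -
  have c: "real (m choose k) = fact m / (fact k * fact (m - k))"
    using k by (simp add: binomial_fact)
  have fk: "(fact k :: real) = real k * fact (k - 1)"
    by (rule fact_reduce) (use k in auto)
  have pos: "real k > 0" "real (m - k) > 0" "(fact (k-1) :: real) > 0" "(fact (m-k) :: real) > 0"
    "(fact s :: real) > 0" using k by auto
  show ?thesis unfolding c wt_def bnd_def fk using gen_eq1[OF pos(1,2,3,4,5)] by simp
qed

lemma numeric_step:
  assumes s: "s \<ge> 1"
  shows "(\<Sum>k\<le>m. real (m choose k) * (if k = 0 then 0 else wt k * bnd s (m - k)))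
         \<le> real (s + 1) * bnd (s + 1) m"
proof (cases "m = 0")
  case True then show ?thesis by (simp add: bnd_def)
next
  case False
  define C where "C = (fact m * 4 * 16^(s-1) / fact s :: real)"
  have Cnn: "C \<ge> 0" by (simp add: C_def)
  have "(\<Sum>k\<le>m. real (m choose k) * (if k = 0 then 0 else wt k * bnd s (m - k)))
      = (\<Sum>k\<in>{1..m-1}. real (m choose k) * (wt k * bnd s (m - k)))"
  proof -
    have "{..m} = insert 0 (insert m {1..m-1})" using False by auto
    moreover have "0 \<notin> insert m {1..m-1}" "m \<notin> {1..m-1}" using False by auto
    ultimately show ?thesis using False by (simp add: bnd_def)
  qed
  also have "\<dots> = (\<Sum>k\<in>{1..m-1}. C * (1 / (real k * (real k + 1) * (real (m - k))^2)))"
  proof (rule sum.cong[OF refl])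
    fix k assume "k \<in> {1..m-1}"
    then have "1 \<le> k" "k < m" by auto
    from term_eq[OF this s] show "real (m choose k) * (wt k * bnd s (m - k)) = C * (1 / (real k * (real k + 1) * (real (m - k))^2))"
      unfolding C_def .
  qed
  also have "\<dots> \<le> (\<Sum>k\<in>{1..m-1}. C * (1 / ((real k)^2 * (real (m - k))^2)))"
  proof (rule sum_mono)
    fix k assume k: "k \<in> {1..m-1}"
    have "(real k)^2 \<le> real k * (real k + 1)" by (simp add: power2_eq_square distrib_left)
    then have "(real k)^2 * (real (m - k))^2 \<le> real k * (real k + 1) * (real (m - k))^2"
      by (intro mult_right_mono) auto
    moreover have "(real k)^2 * (real (m - k))^2 > 0" using k by auto
    ultimately have "1 / (real k * (real k + 1) * (real (m - k))^2) \<le> 1 / ((real k)^2 * (real (m - k))^2)"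
      by (intro divide_left_mono) auto
    then show "C * (1 / (real k * (real k + 1) * (real (m - k))^2)) \<le> C * (1 / ((real k)^2 * (real (m - k))^2))"
      using Cnn by (rule mult_left_mono)
  qed
  also have "\<dots> = C * (\<Sum>k=1..m-1. 1 / ((real k)^2 * (real (m - k))^2))"
    by (simp add: sum_distrib_left)
  also have "\<dots> \<le> C * (8 / (real m)^2)"
    using conv_bound[of m] False Cnn by (intro mult_left_mono) auto
  also have "\<dots> = real (s + 1) * bnd (s + 1) m"
  proof -
    have p16: "(16::real)^(s + 1 - 1) = 16 * 16^(s-1)" using s by (cases s) auto
    moreover have "(fact (s+1) :: real) = (real s + 1) * fact s" by simp
    ultimately show ?thesis unfolding C_def bnd_def p16 using gen_eq2[of "fact s" "real m" "real s" "fact m" "16^(s-1)"] False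
      by (simp only: of_nat_add of_nat_1 mult.assoc) simp
  qed
  finally show ?thesis .
qed

lemma Phi_one: "S \<noteq> {} \<Longrightarrow> Phi w 1 S = w (card S)"
  unfolding Phi_def by (subst parts_one) auto

lemma Phi_bound:
  assumes "finite S" "s \<ge> 1"
  shows "Phi wt s S \<le> bnd s (card S)"
proof -
  obtain s' where s': "s = Suc s'" using assms(2) by (cases s) auto
  have "Phi wt (Suc s') S \<le> bnd (Suc s') (card S)" using assms(1)
  proof (induction s' arbitrary: S)
  case 0
  note base = 0
  show ?case
  proof (cases "S = {}")
    case True then show ?thesis by (simp add: Phi_def parts_empty bnd_def)
  next
    case False
    define m where "m = card S"
    have m: "m \<ge> 1" using False base by (auto simp: m_def card_gt_0_iff Suc_le_eq)
    have fm: "(fact m :: real) = real m * fact (m - 1)" by (rule fact_reduce) (use m in auto)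
    have "wt m = fact (m - 1) * 2 / (real m + 1)" by (simp add: wt_def)
    also have "\<dots> \<le> fact (m - 1) * 2 / real m"
      using m by (intro divide_left_mono) auto
    also have "\<dots> = bnd 1 m" unfolding bnd_def fm using m by (simp add: power2_eq_square)
    finally show ?thesis using Phi_one[OF False, of wt] by (simp add: m_def)
  qed
next
  case (Suc s)
  define m where "m = card S"
  define g where "g k = (if k = 0 then 0 else wt k * bnd (Suc s) (m - k))" for k
  have "real (Suc (Suc s)) * Phi wt (Suc (Suc s)) S = (\<Sum>B\<in>Pow S - {{}}. wt (card B) * Phi wt (Suc s) (S - B))"
    using Phi_rec[OF Suc.prems(1), of "Suc (Suc s)" wt] by simp
  also have "\<dots> \<le> (\<Sum>B\<in>Pow S - {{}}. g (card B))"
  proof (rule sum_mono)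
    fix B assume B: "B \<in> Pow S - {{}}"
    then have fB: "finite B" "B \<noteq> {}" "B \<subseteq> S" using Suc.prems finite_subset by auto
    then have "card B \<noteq> 0" by simp
    moreover have "card (S - B) = m - card B" using fB Suc.prems by (simp add: m_def card_Diff_subset)
    moreover have "Phi wt (Suc s) (S - B) \<le> bnd (Suc s) (card (S - B))" using Suc.IH Suc.prems by simp
    ultimately show "wt (card B) * Phi wt (Suc s) (S - B) \<le> g (card B)"
      by (auto simp: g_def intro!: mult_left_mono wt_nonneg)
  qed
  also have "\<dots> = (\<Sum>B\<in>Pow S. g (card B))"
    by (rule sum.mono_neutral_left) (use Suc.prems in \<open>auto simp: g_def\<close>)
  also have "\<dots> = (\<Sum>k\<le>m. real (m choose k) * g k)"
    unfolding m_def by (rule sum_Pow_card) (use Suc.prems in auto)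
  also have "\<dots> \<le> real (Suc s + 1) * bnd (Suc s + 1) m"
    unfolding g_def by (rule numeric_step) (use Suc in auto)
  finally show ?case by (simp add: m_def)
qed
  then show ?thesis using s' by simp
qed

definition Qf :: "real \<Rightarrow> nat \<Rightarrow> real" where "Qf a n = (\<Prod>k\<in>{1..<n}. a + real k)"

lemma Qf_pos: "a \<ge> 0 \<Longrightarrow> Qf a n > 0"
  unfolding Qf_def by (intro prod_pos) auto

lemma Qf_mono: "0 \<le> a \<Longrightarrow> a \<le> a' \<Longrightarrow> Qf a n \<le> Qf a' n"
  unfolding Qf_def by (intro prod_mono) auto

lemma poch_Qf: "n \<ge> 1 \<Longrightarrow> pochhammer a n = a * Qf a n"
proof -
  assume n: "n \<ge> 1"
  have "{0..<n} = insert 0 {1..<n}" using n by auto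
  then show ?thesis unfolding pochhammer_prod Qf_def by simp
qed

lemma Qf_ratio_tendsto:
  assumes ab: "0 < b" "b < a"
  shows "(\<lambda>n. Qf b n / Qf a n) \<longlonglongrightarrow> 0"
proof -
  define c where "c = (a - b) / (a + 1)"
  have c: "c > 0" using ab by (simp add: c_def)
  have le: "Qf b (Suc m) / Qf a (Suc m) \<le> exp (- c * harm m)" for m
  proof -
    have "Qf b (Suc m) / Qf a (Suc m) = (\<Prod>k\<in>{1..m}. (b + real k) / (a + real k))"
      unfolding Qf_def by (simp add: prod_dividef atLeastLessThanSuc_atLeastAtMost)
    also have "\<dots> \<le> (\<Prod>k\<in>{1..m}. exp (- c * inverse (real k)))"
    proof (rule prod_mono)
      fix k assume k: "k \<in> {1..m}"
      have kp: "real k \<ge> 1" using k by auto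
      have "(b + real k) / (a + real k) = 1 + (- (a - b) / (a + real k))"
        using ab kp by (simp add: field_simps)
      also have "\<dots> \<le> exp (- (a - b) / (a + real k))" by (rule exp_ge_add_one_self)
      also have "\<dots> \<le> exp (- c * inverse (real k))"
      proof -
        have "a + real k \<le> (a + 1) * real k" using ab kp by (simp add: algebra_simps)
        then have "(a - b) / ((a + 1) * real k) \<le> (a - b) / (a + real k)"
          using ab kp by (intro divide_left_mono) auto
        moreover have "c * inverse (real k) = (a - b) / ((a + 1) * real k)"
          unfolding c_def by (simp add: divide_inverse)
        ultimately have "- (a - b) / (a + real k) \<le> - c * inverse (real k)"
          using minus_divide_left[of "a - b" "a + real k"] by linarith
        then show ?thesis by simp
      qed
      finally show "0 \<le> (b + real k) / (a + real k) \<and> (b + real k) / (a + real k) \<le> exp (- c * inverse (real k))"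
        using ab kp by auto
    qed
    also have "\<dots> = exp (- c * harm m)"
      by (simp add: exp_sum[symmetric] harm_def sum_distrib_left)
    finally show ?thesis .
  qed
  have E: "(\<lambda>m. exp (- c * harm m)) \<longlonglongrightarrow> 0"
  proof -
    have "filterlim (\<lambda>m. - c * harm m) at_bot sequentially"
    proof -
      have "filterlim (\<lambda>m. c * harm m) at_top sequentially"
        using harm_at_top c by (intro filterlim_tendsto_pos_mult_at_top[OF tendsto_const]) auto
      then show ?thesis by (simp add: filterlim_uminus_at_bot)
    qed
    then show ?thesis using exp_at_bot filterlim_compose by blast
  qed
  have "(\<lambda>m. Qf b (Suc m) / Qf a (Suc m)) \<longlonglongrightarrow> 0"
  proof (rule tendsto_sandwich[OF _ _ tendsto_const E])
    show "\<forall>\<^sub>F m in sequentially. 0 \<le> Qf b (Suc m) / Qf a (Suc m)"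
      using Qf_pos[of b] Qf_pos[of a] ab by (intro always_eventually allI divide_nonneg_nonneg less_imp_le) auto
    show "\<forall>\<^sub>F m in sequentially. Qf b (Suc m) / Qf a (Suc m) \<le> exp (- c * harm m)"
      using le by (intro always_eventually allI)
  qed
  then show ?thesis by (rule LIMSEQ_imp_Suc)
qed

definition fI :: "(real \<Rightarrow> real) \<Rightarrow> nat \<Rightarrow> nat \<Rightarrow> real \<Rightarrow> real" where
  "fI prior n s \<alpha> = indicator {0<..} \<alpha> * (\<alpha> ^ s / pochhammer \<alpha> n * prior \<alpha>)"

lemma meas_poch[measurable]: "(\<lambda>\<alpha>::real. pochhammer \<alpha> n) \<in> borel_measurable borel"
  unfolding pochhammer_prod by measurable

lemma meas_fI[measurable]: "prior \<in> borel_measurable borel \<Longrightarrow> fI prior n s \<in> borel_measurable borel"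
  unfolding fI_def by measurable

lemma fI_nonneg: "(\<And>a. 0 \<le> prior a) \<Longrightarrow> fI prior n s \<alpha> \<ge> 0"
  unfolding fI_def by (cases "\<alpha> > 0") (auto intro!: mult_nonneg_nonneg divide_nonneg_nonneg pochhammer_nonneg)

lemma Iint_eq:
  assumes "prior \<in> borel_measurable borel" "\<And>a. 0 \<le> prior a"
  shows "(LINT \<alpha>:{0<..}|lborel. \<alpha> ^ s / pochhammer \<alpha> n * prior \<alpha>) = enn2real (\<integral>\<^sup>+\<alpha>. ennreal (fI prior n s \<alpha>) \<partial>lborel)"
proof -
  have "(LINT \<alpha>:{0<..}|lborel. \<alpha> ^ s / pochhammer \<alpha> n * prior \<alpha>) = (LINT \<alpha>|lborel. fI prior n s \<alpha>)"
    unfolding set_lebesgue_integral_def fI_def by simp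
  also have "\<dots> = enn2real (\<integral>\<^sup>+\<alpha>. ennreal (fI prior n s \<alpha>) \<partial>lborel)"
    by (rule integral_eq_nn_integral) (use assms fI_nonneg in auto)
  finally show ?thesis .
qed

lemma Qf_ge1: "a \<ge> 0 \<Longrightarrow> Qf a n \<ge> 1"
  unfolding Qf_def by (intro prod_ge_1) auto

lemma fI_alt: "n \<ge> 1 \<Longrightarrow> s \<ge> 1 \<Longrightarrow> \<alpha> > 0 \<Longrightarrow> fI prior n s \<alpha> = \<alpha>^(s-1) / Qf \<alpha> n * prior \<alpha>"
proof -
  assume n: "n \<ge> 1" and s: "s \<ge> 1" and a: "\<alpha> > 0"
  have e: "\<alpha> ^ s = \<alpha> * \<alpha>^(s-1)" using s by (cases s) auto
  have i: "indicator {0<..} \<alpha> = (1::real)" using a by simp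
  have "\<alpha> * \<alpha>^(s-1) / (\<alpha> * Qf \<alpha> n) = \<alpha>^(s-1) / Qf \<alpha> n"
    using a by (rule mult_divide_mult_cancel_left[OF less_imp_neq[symmetric]])
  then show ?thesis unfolding fI_def poch_Qf[OF n] e i by simp
qed

lemma fI1_le_prior:
  assumes "n \<ge> 1" "\<And>a. 0 \<le> prior a"
  shows "fI prior n 1 \<alpha> \<le> prior \<alpha>"
proof (cases "\<alpha> > 0")
  case True
  have "prior \<alpha> * 1 \<le> prior \<alpha> * Qf \<alpha> n" using Qf_ge1[of \<alpha> n] True assms by (intro mult_left_mono) auto
  then have "prior \<alpha> / Qf \<alpha> n \<le> prior \<alpha>" using Qf_pos[of \<alpha> n] True by (simp add: divide_le_eq)
  then show ?thesis using fI_alt[OF assms(1) _ True, of 1] by simp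
next
  case False then show ?thesis using assms by (simp add: fI_def)
qed

lemma I1_finite:
  assumes "n \<ge> 1" "prior \<in> borel_measurable borel" "\<And>a. 0 \<le> prior a"
    "(\<integral>\<^sup>+ a. ennreal (prior a) \<partial>lborel) = 1"
  shows "(\<integral>\<^sup>+\<alpha>. ennreal (fI prior n 1 \<alpha>) \<partial>lborel) \<le> 1"
proof -
  have "(\<integral>\<^sup>+\<alpha>. ennreal (fI prior n 1 \<alpha>) \<partial>lborel) \<le> (\<integral>\<^sup>+ a. ennreal (prior a) \<partial>lborel)"
    by (intro nn_integral_mono ennreal_leI fI1_le_prior assms)
  then show ?thesis using assms by simp
qed

lemma Is_upper:
  assumes n: "n \<ge> 1" and s: "s \<ge> 2" and a0: "a0 > 0"
    and pm: "prior \<in> borel_measurable borel" and pnn: "\<And>a. 0 \<le> prior a" and p0: "\<And>a. a \<le> 0 \<Longrightarrow> prior a = 0"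
  shows "(\<integral>\<^sup>+\<alpha>. ennreal (fI prior n s \<alpha>) \<partial>lborel)
     \<le> ennreal (a0^(s-1)) * (\<integral>\<^sup>+\<alpha>. ennreal (fI prior n 1 \<alpha>) \<partial>lborel)
       + ennreal (1 / Qf a0 n) * (\<integral>\<^sup>+\<alpha>. ennreal (\<alpha>^(s-1) * prior \<alpha>) \<partial>lborel)"
proof -
  have pt: "fI prior n s \<alpha> \<le> a0^(s-1) * fI prior n 1 \<alpha> + (1 / Qf a0 n) * (\<alpha>^(s-1) * prior \<alpha>)" for \<alpha>
  proof (cases "\<alpha> > 0")
    case False then show ?thesis using p0 by (simp add: fI_def)
  next
    case True
    have e: "fI prior n s \<alpha> = \<alpha>^(s-1) * (prior \<alpha> / Qf \<alpha> n)" using fI_alt[OF n _ True, of s] s by simp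
    have e1: "fI prior n 1 \<alpha> = prior \<alpha> / Qf \<alpha> n" using fI_alt[OF n _ True, of 1] by simp
    have q: "prior \<alpha> / Qf \<alpha> n \<ge> 0" using pnn Qf_pos[of \<alpha> n] True by simp
    show ?thesis
    proof (cases "\<alpha> \<le> a0")
      case True
      then have "\<alpha>^(s-1) \<le> a0^(s-1)" using \<open>\<alpha> > 0\<close> by (intro power_mono) auto
      then have "fI prior n s \<alpha> \<le> a0^(s-1) * fI prior n 1 \<alpha>" unfolding e e1 using q by (rule mult_right_mono)
      moreover have "(1 / Qf a0 n) * (\<alpha>^(s-1) * prior \<alpha>) \<ge> 0" using Qf_pos[of a0 n] a0 pnn \<open>\<alpha> > 0\<close> by simp
      ultimately show ?thesis by linarith
    next
      case False
      have "prior \<alpha> / Qf \<alpha> n \<le> prior \<alpha> / Qf a0 n"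
        using Qf_mono[of a0 \<alpha> n] Qf_pos[of a0 n] False a0 pnn by (intro divide_left_mono) auto
      then have "fI prior n s \<alpha> \<le> (1 / Qf a0 n) * (\<alpha>^(s-1) * prior \<alpha>)"
        unfolding e using \<open>\<alpha> > 0\<close> mult_left_mono[of "prior \<alpha> / Qf \<alpha> n" "prior \<alpha> / Qf a0 n" "\<alpha>^(s-1)"]
        by simp
      moreover have "a0^(s-1) * fI prior n 1 \<alpha> \<ge> 0" using a0 fI_nonneg[OF pnn] by simp
      ultimately show ?thesis by linarith
    qed
  qed
  have "(\<integral>\<^sup>+\<alpha>. ennreal (fI prior n s \<alpha>) \<partial>lborel)
      \<le> (\<integral>\<^sup>+\<alpha>. ennreal (a0^(s-1)) * ennreal (fI prior n 1 \<alpha>) + ennreal (1 / Qf a0 n) * ennreal (\<alpha>^(s-1) * prior \<alpha>) \<partial>lborel)"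
  proof (rule nn_integral_mono)
    fix \<alpha>
    have nn1: "a0^(s-1) * fI prior n 1 \<alpha> \<ge> 0" using a0 fI_nonneg[OF pnn] by simp
    have nn2: "(1 / Qf a0 n) * (\<alpha>^(s-1) * prior \<alpha>) \<ge> 0"
      using Qf_pos[of a0 n] a0 pnn p0[of \<alpha>] by (cases "\<alpha> > 0") auto
    have "ennreal (fI prior n s \<alpha>) \<le> ennreal (a0^(s-1) * fI prior n 1 \<alpha> + (1 / Qf a0 n) * (\<alpha>^(s-1) * prior \<alpha>))"
      using pt by (rule ennreal_leI)
    also have "\<dots> = ennreal (a0^(s-1)) * ennreal (fI prior n 1 \<alpha>) + ennreal (1 / Qf a0 n) * ennreal (\<alpha>^(s-1) * prior \<alpha>)"
    proof -
      have x: "\<alpha>^(s-1) * prior \<alpha> \<ge> 0" using pnn p0[of \<alpha>] by (cases "\<alpha> > 0") auto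
      have y: "1 / Qf a0 n \<ge> 0" using Qf_pos[of a0 n] a0 by simp
      have z: "a0^(s-1) \<ge> 0" using a0 by simp
      show ?thesis
        by (subst ennreal_plus[OF nn1 nn2], subst ennreal_mult[OF z fI_nonneg[OF pnn]], subst ennreal_mult[OF y x]) (rule refl)
    qed
    finally show "ennreal (fI prior n s \<alpha>) \<le> ennreal (a0^(s-1)) * ennreal (fI prior n 1 \<alpha>) + ennreal (1 / Qf a0 n) * ennreal (\<alpha>^(s-1) * prior \<alpha>)" .
  qed
  also have "\<dots> = ennreal (a0^(s-1)) * (\<integral>\<^sup>+\<alpha>. ennreal (fI prior n 1 \<alpha>) \<partial>lborel)
       + ennreal (1 / Qf a0 n) * (\<integral>\<^sup>+\<alpha>. ennreal (\<alpha>^(s-1) * prior \<alpha>) \<partial>lborel)"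
    using pm by (simp add: nn_integral_add nn_integral_cmult)
  finally show ?thesis .
qed

lemma I1_lower:
  assumes n: "n \<ge> 1" and b: "b > 0"
    and pm: "prior \<in> borel_measurable borel" and pnn: "\<And>a. 0 \<le> prior a"
  shows "ennreal (1 / Qf b n) * (\<integral>\<^sup>+\<alpha>. ennreal (indicator {0<..b} \<alpha> * prior \<alpha>) \<partial>lborel)
     \<le> (\<integral>\<^sup>+\<alpha>. ennreal (fI prior n 1 \<alpha>) \<partial>lborel)"
proof -
  have "ennreal (1 / Qf b n) * (\<integral>\<^sup>+\<alpha>. ennreal (indicator {0<..b} \<alpha> * prior \<alpha>) \<partial>lborel)
      = (\<integral>\<^sup>+\<alpha>. ennreal (1 / Qf b n) * ennreal (indicator {0<..b} \<alpha> * prior \<alpha>) \<partial>lborel)"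
    using pm by (simp add: nn_integral_cmult)
  also have "\<dots> \<le> (\<integral>\<^sup>+\<alpha>. ennreal (fI prior n 1 \<alpha>) \<partial>lborel)"
  proof (rule nn_integral_mono)
    fix \<alpha>
    show "ennreal (1 / Qf b n) * ennreal (indicator {0<..b} \<alpha> * prior \<alpha>) \<le> ennreal (fI prior n 1 \<alpha>)"
    proof (cases "\<alpha> \<in> {0<..b}")
      case False then show ?thesis by simp
    next
      case True
      then have a: "\<alpha> > 0" "\<alpha> \<le> b" by auto
      have "prior \<alpha> / Qf b n \<le> prior \<alpha> / Qf \<alpha> n"
        using Qf_mono[of \<alpha> b n] Qf_pos[of \<alpha> n] a pnn by (intro divide_left_mono) auto
      then show ?thesis using True fI_alt[OF n _ a(1), of 1] Qf_pos[of b n] b pnn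
        by (simp add: ennreal_mult[symmetric] ennreal_leI)
    qed
  qed
  finally show ?thesis .
qed

lemma prior_pos_int:
  assumes b: "b > 0" and pm: "prior \<in> borel_measurable borel" and pnn: "\<And>a. 0 \<le> prior a"
    and A2: "\<exists>\<epsilon> \<delta> \<beta>::real. \<epsilon> > 0 \<and> \<delta> > 0 \<and>
               (\<forall>a\<in>{0<..<\<epsilon>}. (1 / \<delta>) * a powr \<beta> \<le> prior a \<and> prior a \<le> \<delta> * a powr \<beta>)"
  shows "(\<integral>\<^sup>+\<alpha>. ennreal (indicator {0<..b} \<alpha> * prior \<alpha>) \<partial>lborel) > 0"
proof -
  obtain \<epsilon> \<delta> \<beta> :: real where e: "\<epsilon> > 0" "\<delta> > 0"
    and lb: "\<And>a. a \<in> {0<..<\<epsilon>} \<Longrightarrow> (1 / \<delta>) * a powr \<beta> \<le> prior a" using A2 by blast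
  define e' where "e' = min b \<epsilon>"
  have e': "e' > 0" "e' \<le> b" "e' \<le> \<epsilon>" using b e by (auto simp: e'_def)
  have pos: "indicator {0<..b} \<alpha> * prior \<alpha> > 0" if "\<alpha> \<in> {0<..<e'}" for \<alpha>
  proof -
    have "\<alpha> \<in> {0<..<\<epsilon>}" "\<alpha> \<in> {0<..b}" using that e' by auto
    moreover have "(1 / \<delta>) * \<alpha> powr \<beta> > 0" using e that by simp
    ultimately show ?thesis using lb by force
  qed
  show ?thesis
  proof (rule ccontr)
    assume "\<not> ?thesis"
    then have "(\<integral>\<^sup>+\<alpha>. ennreal (indicator {0<..b} \<alpha> * prior \<alpha>) \<partial>lborel) = 0" by simp
    then have "AE \<alpha> in lborel. ennreal (indicator {0<..b} \<alpha> * prior \<alpha>) = 0"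
      using pm by (subst (asm) nn_integral_0_iff_AE) auto
    then have "AE \<alpha> in lborel. \<alpha> \<notin> {0<..<e'}"
      by eventually_elim (use pos in \<open>force\<close>)
    then have "emeasure lborel {x. 0 < x \<and> x < e'} = 0"
      by (subst (asm) AE_iff_measurable[OF _ refl]) auto
    moreover have "{x. 0 < x \<and> x < e'} = {0<..<e'}" by auto
    ultimately have "emeasure lborel {0<..<e'} = 0" by simp
    then show False using e' by simp
  qed
qed

locale setting =
  fixes ths c :: real
  assumes c_pos: "c > 0"
begin

definition "Iv = {ths - c<..<ths + c}"
definition "U = uniform_measure lborel Iv"
definition "P = PiM UNIV (\<lambda>_::nat. U)"

lemma Iv_meas: "emeasure lborel Iv = ennreal (2 * c)"
  using c_pos by (simp add: Iv_def)

lemma prob_U: "prob_space U"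
  unfolding U_def using c_pos by (intro prob_space_uniform_measure) (auto simp: Iv_meas)

lemma sets_U[measurable_cong]: "sets U = sets borel"
  by (simp add: U_def)

lemma space_U: "space U = UNIV"
  by (simp add: U_def)

interpretation PP: product_prob_space "\<lambda>_::nat. U" UNIV
  by (simp add: product_prob_space_def product_sigma_finite_def prob_U prob_space_imp_sigma_finite
       product_prob_space_axioms_def)

lemma PP_loc: "product_prob_space (\<lambda>_::nat. U)"
  by (simp add: product_prob_space_def product_sigma_finite_def prob_U prob_space_imp_sigma_finite
       product_prob_space_axioms_def)

lemma prob_P: "prob_space P"
  unfolding P_def by (rule PP.prob_space_axioms)

lemma sets_P[measurable_cong]: "sets P = sets (PiM UNIV (\<lambda>_::nat. borel))"
  unfolding P_def by (rule sets_PiM_cong) (auto simp: sets_U)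

lemma space_P: "space P = UNIV"
  by (simp add: P_def space_PiM space_U)

lemma emeasure_U: "A \<in> sets borel \<Longrightarrow> emeasure U A = emeasure lborel (Iv \<inter> A) / ennreal (2 * c)"
  unfolding U_def by (subst emeasure_uniform_measure) (auto simp: Iv_meas[symmetric] Iv_def)

lemma coord_meas[measurable]: "(\<lambda>\<omega>. \<omega> i) \<in> borel_measurable P"
  by (simp add: measurable_cong_sets[OF sets_P refl])

lemma distr_P_coord: "distr P U (\<lambda>\<omega>. \<omega> i) = U"
  unfolding P_def by (rule PP.PiM_component) simp

lemma indep_coords:
  assumes J: "finite J" "J \<noteq> {}"
  shows "prob_space.indep_vars P (\<lambda>_. borel) (\<lambda>i \<omega>. \<omega> i) J"
proof -
  interpret p: prob_space P by (rule prob_P)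
  have "distr P (PiM J (\<lambda>_. borel)) (\<lambda>x. \<lambda>i\<in>J. x i) = distr P (PiM J (\<lambda>_. U)) (\<lambda>x. restrict x J)"
    by (rule distr_cong) (auto simp: restrict_def intro!: sets_PiM_cong simp: sets_U)
  also have "\<dots> = PiM J (\<lambda>_. U)"
    unfolding P_def by (rule PP.distr_PiM_restrict_finite) (use J in auto)
  also have "\<dots> = PiM J (\<lambda>i. distr P borel (\<lambda>\<omega>. \<omega> i))"
  proof (rule PiM_cong[OF refl])
    fix i
    have "distr P borel (\<lambda>\<omega>. \<omega> i) = distr P U (\<lambda>\<omega>. \<omega> i)"
      by (rule distr_cong) (auto simp: sets_U)
    then show "U = distr P borel (\<lambda>\<omega>. \<omega> i)" using distr_P_coord by simp
  qed
  finally show ?thesis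
    by (subst p.indep_vars_iff_distr_eq_PiM'[OF J(2)]) auto
qed

end

lemma aux_alg: "(c::real) > 0 \<Longrightarrow> (2*c / (real a + 1)) * (real (a+1) * Y * (1 / (2*c))) = Y"
proof -
  assume c: "c > 0"
  have h: "real a + 1 > 0" by simp
  have "(2*c / (real a + 1)) * (real (a+1) * Y * (1 / (2*c))) = Y * ((2*c / (real a + 1)) * (real a + 1)) * (1 / (2*c))"
    by (simp only: of_nat_Suc of_nat_add of_nat_1 add.commute[of 1] mult.assoc mult.commute mult.left_commute)
  also have "(2*c / (real a + 1)) * (real a + 1) = 2*c" using h by simp
  finally show ?thesis using c by simp
qed

lemma int_right:
  fixes c ths :: real and a :: nat
  assumes c: "c > 0"
  shows "(\<integral>\<^sup>+\<theta>. ennreal (indicator {ths..ths+c} \<theta> * (1 - (\<theta> - ths) / (2*c))^a) \<partial>lborel) \<le> ennreal (2*c / (a+1))"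
proof -
  define F where "F \<theta> = - (2*c / (a+1)) * (1 - (\<theta> - ths) / (2*c))^(a+1)" for \<theta>
  have d: "(F has_vector_derivative (1 - (\<theta> - ths) / (2*c))^a) (at \<theta> within {ths..ths+c})" for \<theta>
  proof -
    have "((\<lambda>\<theta>. 1 - (\<theta> - ths) / (2*c)) has_real_derivative (- (1 / (2*c)))) (at \<theta> within {ths..ths+c})"
      using c by (auto intro!: derivative_eq_intros)
    from DERIV_power[OF this, of "a+1"]
    have "((\<lambda>\<theta>. (1 - (\<theta> - ths) / (2*c))^(a+1)) has_real_derivative (real (a+1) * (1 - (\<theta> - ths) / (2*c))^a * (- (1 / (2*c))))) (at \<theta> within {ths..ths+c})"
      by simp
    from DERIV_cmult[OF this, of "- (2*c / (a+1))"]
    have "(F has_real_derivative (- (2*c / (a+1)) * (real (a+1) * (1 - (\<theta> - ths) / (2*c))^a * (- (1 / (2*c)))))) (at \<theta> within {ths..ths+c})"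
      unfolding F_def .
    moreover have "- (2*c / (a+1)) * (real (a+1) * (1 - (\<theta> - ths) / (2*c))^a * (- (1 / (2*c)))) = (1 - (\<theta> - ths) / (2*c))^a"
      using aux_alg[OF c, of a "(1 - (\<theta> - ths) / (2*c))^a"] c by simp
    ultimately show ?thesis by (simp add: has_real_derivative_iff_has_vector_derivative)
  qed
  have hi: "((\<lambda>\<theta>. (1 - (\<theta> - ths) / (2*c))^a) has_integral (F (ths+c) - F ths)) {ths..ths+c}"
    by (rule fundamental_theorem_of_calculus) (use c d in auto)
  have "(\<integral>\<^sup>+\<theta>. ennreal (indicator {ths..ths+c} \<theta> * (1 - (\<theta> - ths) / (2*c))^a) \<partial>lborel) = ennreal (F (ths+c) - F ths)"
  proof (rule nn_integral_has_integral_lebesgue[OF _ hi])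
    fix x assume "x \<in> {ths..ths+c}"
    then have "1 - (x - ths) / (2*c) \<ge> 0" using c by (simp add: field_simps)
    then show "0 \<le> (1 - (x - ths) / (2*c))^a" by simp
  qed
  also have "F (ths+c) - F ths \<le> 2*c / (a+1)"
  proof -
    have "F (ths+c) = - (2*c / (a+1)) * (1/2)^(a+1)" unfolding F_def using c by simp
    moreover have "F ths = - (2*c / (a+1))" unfolding F_def by simp
    moreover have "(2*c / (a+1)) * (1/2)^(a+1) \<ge> 0" using c by simp
    ultimately show ?thesis by simp
  qed
  then have "ennreal (F (ths+c) - F ths) \<le> ennreal (2*c / (a+1))" by (rule ennreal_leI)
  finally show ?thesis .
qed

lemma int_left:
  fixes c ths :: real and a :: nat
  assumes c: "c > 0"
  shows "(\<integral>\<^sup>+\<theta>. ennreal (indicator {ths-c..ths} \<theta> * (1 + (\<theta> - ths) / (2*c))^a) \<partial>lborel) \<le> ennreal (2*c / (a+1))"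
proof -
  define F where "F \<theta> = (2*c / (a+1)) * (1 + (\<theta> - ths) / (2*c))^(a+1)" for \<theta>
  have d: "(F has_vector_derivative (1 + (\<theta> - ths) / (2*c))^a) (at \<theta> within {ths-c..ths})" for \<theta>
  proof -
    have "((\<lambda>\<theta>. 1 + (\<theta> - ths) / (2*c)) has_real_derivative (1 / (2*c))) (at \<theta> within {ths-c..ths})"
      using c by (auto intro!: derivative_eq_intros)
    from DERIV_power[OF this, of "a+1"]
    have "((\<lambda>\<theta>. (1 + (\<theta> - ths) / (2*c))^(a+1)) has_real_derivative (real (a+1) * (1 + (\<theta> - ths) / (2*c))^a * (1 / (2*c)))) (at \<theta> within {ths-c..ths})"
      by simp
    from DERIV_cmult[OF this, of "(2*c / (a+1))"]
    have "(F has_real_derivative ((2*c / (a+1)) * (real (a+1) * (1 + (\<theta> - ths) / (2*c))^a * (1 / (2*c))))) (at \<theta> within {ths-c..ths})"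
      unfolding F_def .
    moreover have "(2*c / (a+1)) * (real (a+1) * (1 + (\<theta> - ths) / (2*c))^a * (1 / (2*c))) = (1 + (\<theta> - ths) / (2*c))^a"
      using aux_alg[OF c, of a "(1 + (\<theta> - ths) / (2*c))^a"] c by simp
    ultimately show ?thesis by (simp add: has_real_derivative_iff_has_vector_derivative)
  qed
  have hi: "((\<lambda>\<theta>. (1 + (\<theta> - ths) / (2*c))^a) has_integral (F ths - F (ths-c))) {ths-c..ths}"
    by (rule fundamental_theorem_of_calculus) (use c d in auto)
  have "(\<integral>\<^sup>+\<theta>. ennreal (indicator {ths-c..ths} \<theta> * (1 + (\<theta> - ths) / (2*c))^a) \<partial>lborel) = ennreal (F ths - F (ths-c))"
  proof (rule nn_integral_has_integral_lebesgue[OF _ hi])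
    fix x assume "x \<in> {ths-c..ths}"
    then have "1 + (x - ths) / (2*c) \<ge> 0" using c by (simp add: field_simps)
    then show "0 \<le> (1 + (x - ths) / (2*c))^a" by simp
  qed
  also have "F ths - F (ths-c) \<le> 2*c / (a+1)"
  proof -
    have "F (ths-c) = (2*c / (a+1)) * (1/2)^(a+1)" unfolding F_def using c by simp
    moreover have "F ths = (2*c / (a+1))" unfolding F_def by simp
    moreover have "(2*c / (a+1)) * (1/2)^(a+1) \<ge> 0" using c by simp
    ultimately show ?thesis by simp
  qed
  then have "ennreal (F ths - F (ths-c)) \<le> ennreal (2*c / (a+1))" by (rule ennreal_leI)
  finally show ?thesis .
qed

context setting
begin

definition Gr :: "(nat \<Rightarrow> real) \<Rightarrow> nat set \<Rightarrow> real \<Rightarrow> real" where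
  "Gr x B \<theta> = (\<Prod>i\<in>B. indicator {\<theta> - c<..<\<theta> + c} (x i)) * indicator Iv \<theta>"
definition "Hn x B = (\<integral>\<^sup>+\<theta>. ennreal (Gr x B \<theta>) \<partial>lborel)"
definition "Hr x B = (LINT \<theta>|lborel. Gr x B \<theta>)"

lemma Gr_meas_Pi: "(\<lambda>p. Gr (fst p) B (snd p)) \<in> borel_measurable (PiM UNIV (\<lambda>_. borel) \<Otimes>\<^sub>M lborel)"
  unfolding Gr_def Iv_def indicator_def greaterThanLessThan_iff by measurable

lemma Gr_meas_PiB: "(\<lambda>p. Gr (fst p) B (snd p)) \<in> borel_measurable (PiM B (\<lambda>_. borel) \<Otimes>\<^sub>M lborel)"
  unfolding Gr_def Iv_def indicator_def greaterThanLessThan_iff by measurable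

lemma Gr_meas[measurable]: "(\<lambda>p. Gr (fst p) B (snd p)) \<in> borel_measurable (P \<Otimes>\<^sub>M lborel)"
  using Gr_meas_Pi by (simp add: measurable_cong_sets[OF sets_pair_measure_cong[OF sets_P refl] refl])

lemma Gr_meas2[measurable]: "Gr x B \<in> borel_measurable lborel"
  using measurable_Pair2[OF Gr_meas_Pi, of x B] by (simp add: space_PiM)

lemma Gr_nonneg: "Gr x B \<theta> \<ge> 0"
  unfolding Gr_def by (intro mult_nonneg_nonneg prod_nonneg) auto

lemma Gr_le: "Gr x B \<theta> \<le> indicator Iv \<theta>"
proof -
  have "(\<Prod>i\<in>B. indicator {\<theta> - c<..<\<theta> + c} (x i)) \<le> (1::real)"
    by (intro prod_le_1) auto
  then show ?thesis unfolding Gr_def by (cases "\<theta> \<in> Iv") auto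
qed

lemma Gr_integrable: "integrable lborel (Gr x B)"
proof -
  have ii: "integrable lborel (indicator Iv :: real \<Rightarrow> real)"
    using Iv_meas by (simp add: Iv_def)
  have "AE \<theta> in lborel. norm (Gr x B \<theta>) \<le> norm (indicator Iv \<theta> :: real)"
    using Gr_le Gr_nonneg by (auto simp: abs_of_nonneg)
  then show ?thesis by (rule Bochner_Integration.integrable_bound[OF ii Gr_meas2])
qed

lemma Hn_le: "Hn x B \<le> ennreal (2 * c)"
proof -
  have "Hn x B \<le> (\<integral>\<^sup>+\<theta>. indicator Iv \<theta> \<partial>lborel)"
    unfolding Hn_def
  proof (intro nn_integral_mono)
    fix \<theta> show "ennreal (Gr x B \<theta>) \<le> indicator Iv \<theta>"
      using ennreal_leI[OF Gr_le[of x B \<theta>]] by (simp add: ennreal_indicator)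
  qed
  also have "\<dots> = ennreal (2 * c)" using Iv_meas by (simp add: Iv_def)
  finally show ?thesis .
qed

lemma Hr_Hn: "Hr x B = enn2real (Hn x B)"
  unfolding Hr_def Hn_def by (rule integral_eq_nn_integral) (auto simp: Gr_nonneg)

lemma Hn_Hr: "Hn x B = ennreal (Hr x B)"
  using Hn_le[of x B] unfolding Hr_Hn by (simp add: ennreal_enn2real_if top_unique) (auto simp: top_unique)

lemma Hr_nonneg: "Hr x B \<ge> 0" by (simp add: Hr_Hn)

lemma Hr_le: "Hr x B \<le> 2 * c"
  using Hn_le[of x B] c_pos unfolding Hn_Hr by simp

lemma Hr_meas[measurable]: "(\<lambda>x. Hr x B) \<in> borel_measurable P"
  unfolding Hr_def by (rule lborel.borel_measurable_lebesgue_integral) (use Gr_meas in simp)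

lemma Hn_meas[measurable]: "(\<lambda>x. Hn x B) \<in> borel_measurable P"
  unfolding Hn_Hr by measurable

lemma Hn_meas_PiB: "(\<lambda>x. Hn x B) \<in> borel_measurable (PiM B (\<lambda>_. borel))"
  unfolding Hn_def by (rule lborel.borel_measurable_nn_integral) (use Gr_meas_PiB in simp)

lemma Hn_restrict: "Hn (restrict x B) B = Hn x B"
proof -
  have "Gr (restrict x B) B = Gr x B" by (auto simp: Gr_def intro!: prod.cong)
  then show ?thesis by (simp add: Hn_def)
qed

lemma dpm_m_eq: "dpm_m (unif_kernel c) (unif_dens ths c) x B = Hr x B / (2 * c) ^ (card B + 1)"
proof -
  have "(\<Prod>i\<in>B. unif_kernel c (x i) \<theta>) * unif_dens ths c \<theta> = Gr x B \<theta> / (2 * c) ^ (card B + 1)" for \<theta>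
    unfolding unif_kernel_def unif_dens_def Gr_def Iv_def
    by (simp add: prod_dividef)
  then show ?thesis unfolding dpm_m_def Hr_def by simp
qed

end

context setting
begin

definition "pf \<theta> = 1 - \<bar>\<theta> - ths\<bar> / (2 * c)"

lemma leb_bound:
  assumes "\<theta> \<in> Iv"
  shows "emeasure U {\<theta> - c<..<\<theta> + c} \<le> ennreal (pf \<theta>)"
proof -
  have "emeasure lborel (Iv \<inter> {\<theta> - c<..<\<theta> + c}) \<le> ennreal (2 * c - \<bar>\<theta> - ths\<bar>)"
  proof (cases "\<theta> \<ge> ths")
    case True
    have "emeasure lborel (Iv \<inter> {\<theta> - c<..<\<theta> + c}) \<le> emeasure lborel {\<theta> - c<..<ths + c}"
      by (rule emeasure_mono) (auto simp: Iv_def)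
    also have "\<dots> = ennreal (2 * c - \<bar>\<theta> - ths\<bar>)" using True assms by (simp add: Iv_def)
    finally show ?thesis .
  next
    case False
    have "emeasure lborel (Iv \<inter> {\<theta> - c<..<\<theta> + c}) \<le> emeasure lborel {ths - c<..<\<theta> + c}"
      by (rule emeasure_mono) (auto simp: Iv_def)
    also have "\<dots> = ennreal (2 * c - \<bar>\<theta> - ths\<bar>)" using False assms by (simp add: Iv_def)
    finally show ?thesis .
  qed
  then have "emeasure U {\<theta> - c<..<\<theta> + c} \<le> ennreal (2 * c - \<bar>\<theta> - ths\<bar>) / ennreal (2 * c)"
    by (subst emeasure_U) (auto intro: divide_right_mono_ennreal)
  also have "\<dots> = ennreal ((2 * c - \<bar>\<theta> - ths\<bar>) / (2 * c))"
    using assms c_pos by (intro divide_ennreal) (auto simp: Iv_def)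
  also have "(2 * c - \<bar>\<theta> - ths\<bar>) / (2 * c) = pf \<theta>"
    using c_pos by (simp add: pf_def field_simps)
  finally show ?thesis .
qed

lemma inner_bound:
  assumes B: "finite B" "B \<noteq> {}"
  shows "(\<integral>\<^sup>+\<omega>. ennreal (Gr \<omega> B \<theta>) \<partial>P) \<le> ennreal (indicator Iv \<theta> * pf \<theta> ^ card B)"
proof (cases "\<theta> \<in> Iv")
  case False then show ?thesis by (simp add: Gr_def)
next
  case True
  interpret p: prob_space P by (rule prob_P)
  define S where "S = {\<theta> - c<..<\<theta> + c}"
  have "(\<integral>\<^sup>+\<omega>. ennreal (Gr \<omega> B \<theta>) \<partial>P) = (\<integral>\<^sup>+\<omega>. (\<Prod>i\<in>B. ennreal (indicator S (\<omega> i))) \<partial>P)"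
    using True by (simp add: Gr_def S_def prod_ennreal)
  also have "\<dots> = (\<Prod>i\<in>B. \<integral>\<^sup>+\<omega>. ennreal (indicator S (\<omega> i)) \<partial>P)"
  proof (rule p.indep_vars_nn_integral[OF B(1)])
    have "p.indep_vars (\<lambda>_. borel) (\<lambda>i \<omega>. (\<lambda>x. ennreal (indicator S x)) (\<omega> i)) B"
      by (rule p.indep_vars_compose2[OF indep_coords[OF B]]) (auto simp: S_def)
    then show "p.indep_vars (\<lambda>_. borel) (\<lambda>i \<omega>. ennreal (indicator S (\<omega> i))) B" by simp
  qed simp
  also have "\<dots> = (\<Prod>i\<in>B. emeasure U S)"
  proof (rule prod.cong[OF refl])
    fix i
    have "(\<integral>\<^sup>+\<omega>. ennreal (indicator S (\<omega> i)) \<partial>P) = (\<integral>\<^sup>+x. ennreal (indicator S x) \<partial>distr P U (\<lambda>\<omega>. \<omega> i))"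
      by (subst nn_integral_distr) (auto simp: S_def measurable_cong_sets[OF refl sets_U] measurable_cong_sets[OF sets_U refl])
    also have "\<dots> = emeasure U S" unfolding distr_P_coord
      by (simp add: ennreal_indicator S_def sets_U)
    finally show "(\<integral>\<^sup>+\<omega>. ennreal (indicator S (\<omega> i)) \<partial>P) = emeasure U S" .
  qed
  also have "\<dots> = emeasure U S ^ card B" by simp
  also have "\<dots> \<le> ennreal (pf \<theta>) ^ card B"
    using leb_bound[OF True] unfolding S_def by (rule power_mono) simp
  also have "\<dots> = ennreal (indicator Iv \<theta> * pf \<theta> ^ card B)"
  proof -
    have "pf \<theta> \<ge> 0" using True c_pos by (auto simp: pf_def Iv_def field_simps)
    then show ?thesis using True by (simp add: ennreal_power)
  qed
  finally show ?thesis .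
qed

lemma E_block:
  assumes B: "finite B" "B \<noteq> {}"
  shows "(\<integral>\<^sup>+\<omega>. Hn \<omega> B \<partial>P) \<le> ennreal (4 * c / (card B + 1))"
proof -
  interpret p: prob_space P by (rule prob_P)
  interpret pp: pair_sigma_finite P lborel
    by (simp add: pair_sigma_finite_def p.sigma_finite_measure_axioms lborel.sigma_finite_measure_axioms)
  define a where "a = card B"
  have "(\<integral>\<^sup>+\<omega>. Hn \<omega> B \<partial>P) = (\<integral>\<^sup>+\<theta>. (\<integral>\<^sup>+\<omega>. ennreal (Gr \<omega> B \<theta>) \<partial>P) \<partial>lborel)"
    unfolding Hn_def by (rule pp.Fubini'[symmetric]) (use Gr_meas in simp)
  also have "\<dots> \<le> (\<integral>\<^sup>+\<theta>. ennreal (indicator Iv \<theta> * pf \<theta> ^ a) \<partial>lborel)"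
    by (intro nn_integral_mono inner_bound[OF B, unfolded a_def[symmetric]])
  also have "\<dots> \<le> (\<integral>\<^sup>+\<theta>. ennreal (indicator {ths-c..ths} \<theta> * (1 + (\<theta> - ths) / (2*c))^a)
                      + ennreal (indicator {ths..ths+c} \<theta> * (1 - (\<theta> - ths) / (2*c))^a) \<partial>lborel)"
  proof (intro nn_integral_mono)
    fix \<theta>
    have n1: "indicator {ths-c..ths} \<theta> * (1 + (\<theta> - ths) / (2*c))^a \<ge> 0"
    proof (cases "\<theta> \<in> {ths-c..ths}")
      case True then have "1 + (\<theta> - ths) / (2*c) \<ge> 0" using c_pos by (simp add: field_simps)
      then show ?thesis by simp
    qed simp
    have n2: "indicator {ths..ths+c} \<theta> * (1 - (\<theta> - ths) / (2*c))^a \<ge> 0"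
    proof (cases "\<theta> \<in> {ths..ths+c}")
      case True then have "1 - (\<theta> - ths) / (2*c) \<ge> 0" using c_pos by (simp add: field_simps)
      then show ?thesis by simp
    qed simp
    have "indicator Iv \<theta> * pf \<theta> ^ a \<le> indicator {ths-c..ths} \<theta> * (1 + (\<theta> - ths) / (2*c))^a
                      + indicator {ths..ths+c} \<theta> * (1 - (\<theta> - ths) / (2*c))^a"
    proof (cases "\<theta> \<in> Iv")
      case False then show ?thesis using n1 n2 by simp
    next
      case True
      show ?thesis
      proof (cases "\<theta> \<le> ths")
        case le: True
        then have "pf \<theta> = 1 + (\<theta> - ths) / (2*c)" by (simp add: pf_def minus_divide_left)
        moreover have "\<theta> \<in> {ths-c..ths}" using True le by (auto simp: Iv_def)
        ultimately show ?thesis using True n2 by simp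
      next
        case gt: False
        then have "pf \<theta> = 1 - (\<theta> - ths) / (2*c)" by (simp add: pf_def)
        moreover have "\<theta> \<in> {ths..ths+c}" using True gt by (auto simp: Iv_def)
        ultimately show ?thesis using True n1 by simp
      qed
    qed
    then show "ennreal (indicator Iv \<theta> * pf \<theta> ^ a) \<le> ennreal (indicator {ths-c..ths} \<theta> * (1 + (\<theta> - ths) / (2*c))^a)
                      + ennreal (indicator {ths..ths+c} \<theta> * (1 - (\<theta> - ths) / (2*c))^a)"
      using n1 n2 by (simp add: ennreal_plus[symmetric] ennreal_leI del: ennreal_plus)
  qed
  also have "\<dots> = (\<integral>\<^sup>+\<theta>. ennreal (indicator {ths-c..ths} \<theta> * (1 + (\<theta> - ths) / (2*c))^a) \<partial>lborel)
                 + (\<integral>\<^sup>+\<theta>. ennreal (indicator {ths..ths+c} \<theta> * (1 - (\<theta> - ths) / (2*c))^a) \<partial>lborel)"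
    by (rule nn_integral_add) auto
  also have "\<dots> \<le> ennreal (2*c / (a+1)) + ennreal (2*c / (a+1))"
    by (intro add_mono int_left int_right c_pos)
  also have "\<dots> = ennreal (4 * c / (card B + 1))"
    using c_pos by (simp add: a_def ennreal_plus[symmetric] del: ennreal_plus)
  finally show ?thesis .
qed

end

context setting
begin

lemma gen_eq3: "(F::real) / Y * (4 * c / M) = F * (2 / M) * ((2 * c) / Y)"
  by (simp add: divide_inverse mult_ac)

lemma E_prod_blocks:
  assumes A: "partition_on {..<n} A"
  shows "(\<integral>\<^sup>+\<omega>. (\<Prod>B\<in>A. Hn \<omega> B) \<partial>P) = (\<Prod>B\<in>A. \<integral>\<^sup>+\<omega>. Hn \<omega> B \<partial>P)"
proof -
  interpret p: prob_space P by (rule prob_P)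
  have fA: "finite A" using A by (rule partition_on_finite[rotated]) simp
  show ?thesis
  proof (cases "A = {}")
    case True then show ?thesis by (simp add: p.emeasure_space_1)
  next
    case False
    then have n: "{..<n} \<noteq> {}" using A by (auto simp: partition_on_def)
    have sub: "\<And>B. B \<in> A \<Longrightarrow> B \<subseteq> {..<n}" using A by (auto simp: partition_on_def)
    have dj: "disjoint_family_on (\<lambda>B. B) A"
      using A by (auto simp: partition_on_def disjoint_def disjoint_family_on_def)
    have "p.indep_vars (\<lambda>B. PiM B (\<lambda>_. borel)) (\<lambda>B \<omega>. restrict (\<lambda>i. \<omega> i) B) A"
      by (rule p.indep_vars_restrict[OF indep_coords[OF _ n] sub dj]) simp
    then have "p.indep_vars (\<lambda>_. borel) (\<lambda>B \<omega>. (\<lambda>x. Hn x B) (restrict (\<lambda>i. \<omega> i) B)) A"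
      by (rule p.indep_vars_compose2) (rule Hn_meas_PiB)
    then have ind: "p.indep_vars (\<lambda>_. borel) (\<lambda>B \<omega>. Hn \<omega> B) A"
      by (simp add: Hn_restrict)
    show ?thesis by (rule p.indep_vars_nn_integral[OF fA ind]) simp
  qed
qed

lemma sum_card_partition:
  assumes A: "partition_on {..<n} A"
  shows "(\<Sum>B\<in>A. card B) = n"
proof -
  have "card (\<Union>A) = (\<Sum>B\<in>A. card B)"
    by (rule card_Union_disjoint) (use A in \<open>auto simp: partition_on_def disjoint_def pairwise_def disjnt_def intro: finite_subset\<close>)
  moreover have "\<Union>A = {..<n}" using A by (simp add: partition_on_def)
  ultimately show ?thesis by simp
qed

lemma E_part:
  assumes A: "partition_on {..<n} A"
  shows "(\<integral>\<^sup>+\<omega>. ennreal (\<Prod>B\<in>A. fact (card B - 1) * dpm_m (unif_kernel c) (unif_dens ths c) \<omega> B) \<partial>P)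
      \<le> ennreal ((\<Prod>B\<in>A. wt (card B)) / (2 * c) ^ n)"
proof -
  define k where "k B = fact (card B - 1) / (2 * c) ^ (card B + 1)" for B :: "nat set"
  have k: "k B \<ge> 0" for B using c_pos by (simp add: k_def)
  have fA: "finite A" using A by (rule partition_on_finite[rotated]) simp
  have fB: "\<And>B. B \<in> A \<Longrightarrow> finite B" "\<And>B. B \<in> A \<Longrightarrow> B \<noteq> {}"
    using A by (auto simp: partition_on_def intro: finite_subset)
  have "(\<integral>\<^sup>+\<omega>. ennreal (\<Prod>B\<in>A. fact (card B - 1) * dpm_m (unif_kernel c) (unif_dens ths c) \<omega> B) \<partial>P)
      = (\<integral>\<^sup>+\<omega>. (\<Prod>B\<in>A. ennreal (k B)) * (\<Prod>B\<in>A. Hn \<omega> B) \<partial>P)"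
  proof (rule nn_integral_cong)
    fix \<omega>
    have "ennreal (\<Prod>B\<in>A. fact (card B - 1) * dpm_m (unif_kernel c) (unif_dens ths c) \<omega> B)
        = ennreal (\<Prod>B\<in>A. k B * Hr \<omega> B)"
      by (simp add: dpm_m_eq k_def)
    also have "\<dots> = (\<Prod>B\<in>A. ennreal (k B * Hr \<omega> B))"
      by (rule prod_ennreal[symmetric]) (use k Hr_nonneg in simp)
    also have "\<dots> = (\<Prod>B\<in>A. ennreal (k B) * Hn \<omega> B)"
      by (rule prod.cong[OF refl]) (simp add: Hn_Hr ennreal_mult k Hr_nonneg)
    also have "\<dots> = (\<Prod>B\<in>A. ennreal (k B)) * (\<Prod>B\<in>A. Hn \<omega> B)"
      by (rule prod.distrib)
    finally show "ennreal (\<Prod>B\<in>A. fact (card B - 1) * dpm_m (unif_kernel c) (unif_dens ths c) \<omega> B)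
        = (\<Prod>B\<in>A. ennreal (k B)) * (\<Prod>B\<in>A. Hn \<omega> B)" .
  qed
  also have "\<dots> = (\<Prod>B\<in>A. ennreal (k B)) * (\<integral>\<^sup>+\<omega>. (\<Prod>B\<in>A. Hn \<omega> B) \<partial>P)"
    by (rule nn_integral_cmult) measurable
  also have "\<dots> = (\<Prod>B\<in>A. ennreal (k B)) * (\<Prod>B\<in>A. \<integral>\<^sup>+\<omega>. Hn \<omega> B \<partial>P)"
    by (simp add: E_prod_blocks[OF A])
  also have "\<dots> \<le> (\<Prod>B\<in>A. ennreal (k B)) * (\<Prod>B\<in>A. ennreal (4 * c / (card B + 1)))"
    by (intro mult_left_mono prod_mono_ennreal E_block fB) auto
  also have "\<dots> = ennreal (prod k A) * ennreal (\<Prod>B\<in>A. 4 * c / (card B + 1))"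
    using k c_pos by (simp add: prod_ennreal)
  also have "\<dots> = ennreal (prod k A * (\<Prod>B\<in>A. 4 * c / (card B + 1)))"
    using k c_pos by (simp add: ennreal_mult prod_nonneg)
  also have "prod k A * (\<Prod>B\<in>A. 4 * c / (card B + 1)) = (\<Prod>B\<in>A. k B * (4 * c / (card B + 1)))"
    by (rule prod.distrib[symmetric])
  also have "(\<Prod>B\<in>A. k B * (4 * c / (card B + 1))) = (\<Prod>B\<in>A. wt (card B) / (2 * c) ^ card B)"
  proof (rule prod.cong[OF refl])
    fix B
    have "k B * (4 * c / (card B + 1)) = fact (card B - 1) * (2 / (card B + 1)) * ((2 * c) / (2 * c) ^ (card B + 1))"
      unfolding k_def by (rule gen_eq3)
    also have "(2 * c) / (2 * c) ^ (card B + 1) = 1 / (2 * c) ^ card B"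
      using c_pos by (simp add: field_simps)
    finally show "k B * (4 * c / (card B + 1)) = wt (card B) / (2 * c) ^ card B"
      by (simp add: wt_def)
  qed
  also have "\<dots> = (\<Prod>B\<in>A. wt (card B)) / (2 * c) ^ n"
  proof -
    have "(\<Prod>B\<in>A. (2 * c) ^ card B) = (2 * c) ^ n"
      by (simp only: power_sum[symmetric] sum_card_partition[OF A])
    then show ?thesis by (simp only: prod_dividef)
  qed
  finally show ?thesis .
qed

end

lemma markov_nn:
  assumes M: "prob_space M" and f: "f \<in> borel_measurable M" and nn: "\<And>x. f x \<ge> 0" and a: "a > 0"
    and B: "(\<integral>\<^sup>+x. ennreal (f x) \<partial>M) \<le> ennreal B" "B \<ge> 0"
  shows "measure M {x\<in>space M. a \<le> f x} \<le> B / a"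
proof -
  interpret prob_space M by (rule M)
  have s: "{x\<in>space M. a \<le> f x} = {x\<in>space M. 1 \<le> ennreal (1/a) * ennreal (f x)}"
    using a nn by (auto simp: ennreal_mult[symmetric] ennreal_1[symmetric] field_simps simp del: ennreal_1)
  have "emeasure M {x\<in>space M. a \<le> f x} \<le> ennreal (1/a) * (\<integral>\<^sup>+x. ennreal (f x) * indicator (space M) x \<partial>M)"
    unfolding s by (rule nn_integral_Markov_inequality) (use f in auto)
  also have "(\<integral>\<^sup>+x. ennreal (f x) * indicator (space M) x \<partial>M) = (\<integral>\<^sup>+x. ennreal (f x) \<partial>M)"
    by (rule nn_integral_cong) simp
  also have "ennreal (1/a) * (\<integral>\<^sup>+x. ennreal (f x) \<partial>M) \<le> ennreal (1/a) * ennreal B"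
    by (rule mult_left_mono) (use B in auto)
  also have "\<dots> = ennreal (B / a)" using a B by (simp add: ennreal_mult[symmetric])
  finally have "emeasure M {x\<in>space M. a \<le> f x} \<le> ennreal (B / a)" .
  then show ?thesis using a B by (simp add: emeasure_eq_measure)
qed

definition Iint :: "(real \<Rightarrow> real) \<Rightarrow> nat \<Rightarrow> nat \<Rightarrow> real" where
  "Iint prior n s = (LINT \<alpha>:{0<..}|lborel. \<alpha> ^ s / pochhammer \<alpha> n * prior \<alpha>)"

context setting
begin

definition "Sm n x s = (\<Sum>A\<in>set_partitions_k n s. \<Prod>B\<in>A. fact (card B - 1) * dpm_m (unif_kernel c) (unif_dens ths c) x B)"

lemma W_eq: "dpm_W prior (unif_kernel c) (unif_dens ths c) n x s = Iint prior n s * Sm n x s"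
  by (simp add: dpm_W_def Iint_def Sm_def)

lemma dpm_m_nonneg: "dpm_m (unif_kernel c) (unif_dens ths c) x B \<ge> 0"
  using c_pos Hr_nonneg by (simp add: dpm_m_eq)

lemma Sm_nonneg: "Sm n x s \<ge> 0"
  unfolding Sm_def by (intro sum_nonneg prod_nonneg mult_nonneg_nonneg dpm_m_nonneg) auto

lemma spk_parts: "set_partitions_k n s = parts {..<n} s"
  by (simp add: set_partitions_k_def parts_def)

lemma Sm_one: "n \<ge> 1 \<Longrightarrow> Sm n x 1 = fact (n - 1) * Hr x {..<n} / (2 * c) ^ (n + 1)"
proof -
  assume n: "n \<ge> 1"
  then have "{..<n} \<noteq> {}" by (metis lessThan_iff ex_in_conv less_le_trans zero_less_one)
  then show ?thesis unfolding Sm_def spk_parts by (subst parts_one) (use n in \<open>auto simp: dpm_m_eq lessThan_empty_iff\<close>)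
qed

lemma Sm_meas[measurable]: "(\<lambda>x. Sm n x s) \<in> borel_measurable P"
  unfolding Sm_def dpm_m_eq by measurable

lemma E_Sm:
  assumes s: "s \<ge> 1"
  shows "(\<integral>\<^sup>+x. ennreal (Sm n x s) \<partial>P) \<le> ennreal (bnd s n / (2 * c) ^ n)"
proof -
  have fin: "finite (set_partitions_k n s)" unfolding spk_parts by (rule finite_parts) simp
  have nn: "\<And>A x. (\<Prod>B\<in>A. fact (card B - 1) * dpm_m (unif_kernel c) (unif_dens ths c) x B) \<ge> 0"
    by (intro prod_nonneg mult_nonneg_nonneg dpm_m_nonneg) auto
  have "(\<integral>\<^sup>+x. ennreal (Sm n x s) \<partial>P)
      = (\<integral>\<^sup>+x. (\<Sum>A\<in>set_partitions_k n s. ennreal (\<Prod>B\<in>A. fact (card B - 1) * dpm_m (unif_kernel c) (unif_dens ths c) x B)) \<partial>P)"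
    unfolding Sm_def using nn by (simp add: sum_ennreal)
  also have "\<dots> = (\<Sum>A\<in>set_partitions_k n s. \<integral>\<^sup>+x. ennreal (\<Prod>B\<in>A. fact (card B - 1) * dpm_m (unif_kernel c) (unif_dens ths c) x B) \<partial>P)"
    by (rule nn_integral_sum) (simp add: dpm_m_eq)
  also have "\<dots> \<le> (\<Sum>A\<in>set_partitions_k n s. ennreal ((\<Prod>B\<in>A. wt (card B)) / (2 * c) ^ n))"
    by (intro sum_mono E_part) (auto simp: set_partitions_k_def)
  also have "\<dots> = ennreal (Phi wt s {..<n} / (2 * c) ^ n)"
    using c_pos wt_nonneg by (simp add: sum_ennreal prod_nonneg Phi_def spk_parts sum_divide_distrib)
  also have "\<dots> \<le> ennreal (bnd s n / (2 * c) ^ n)"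
    using Phi_bound[of "{..<n}" s] s c_pos by (intro ennreal_leI divide_right_mono) auto
  finally show ?thesis .
qed

lemma Hr_G:
  assumes t: "0 < t" "t \<le> c" and G: "\<forall>i<n. ths - c < x i \<and> x i \<le> ths + c - t"
  shows "Hr x {..<n} \<ge> t"
proof -
  have "(LINT \<theta>|lborel. indicator {ths - t<..<ths} \<theta> :: real) \<le> (LINT \<theta>|lborel. Gr x {..<n} \<theta>)"
  proof (rule integral_mono)
    show "integrable lborel (\<lambda>\<theta>. indicator {ths - t<..<ths} \<theta> :: real)"
      using t by (simp add: integrable_indicator_iff)
    show "integrable lborel (Gr x {..<n})" by (rule Gr_integrable)
    fix \<theta>
    show "indicator {ths - t<..<ths} \<theta> \<le> Gr x {..<n} \<theta>"
    proof (cases "\<theta> \<in> {ths - t<..<ths}")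
      case True
      then have "\<theta> \<in> Iv" using t c_pos by (auto simp: Iv_def)
      moreover have "\<forall>i\<in>{..<n}. x i \<in> {\<theta> - c<..<\<theta> + c}" using G True by auto
      ultimately show ?thesis using True by (simp add: Gr_def)
    next
      case False then show ?thesis using Gr_nonneg by simp
    qed
  qed
  then show ?thesis using t by (simp add: Hr_def)
qed

lemma measure_Gc:
  assumes t: "0 < t" "t \<le> c"
  shows "measure P {x\<in>space P. \<not> (\<forall>i<n. ths - c < x i \<and> x i \<le> ths + c - t)} \<le> real n * (t / (2 * c))"
proof -
  interpret p: prob_space P by (rule prob_P)
  interpret PP: product_prob_space "\<lambda>_::nat. U" UNIV by (rule PP_loc)
  define X where "X = - {ths - c<..ths + c - t}"
  have X: "X \<in> sets borel" by (simp add: X_def)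
  have eq: "{x\<in>space P. \<not> (\<forall>i<n. ths - c < x i \<and> x i \<le> ths + c - t)} = (\<Union>i<n. {x\<in>space P. x i \<in> X})"
    by (auto simp: X_def)
  have each: "measure P {x\<in>space P. x i \<in> X} = t / (2 * c)" for i
  proof -
    have "emeasure P {x\<in>space P. x i \<in> X} = emeasure U X"
      unfolding P_def by (rule PP.emeasure_PiM_Collect_single) (auto simp: sets_U X)
    also have "\<dots> = emeasure lborel (Iv \<inter> X) / ennreal (2 * c)" by (rule emeasure_U[OF X])
    also have "Iv \<inter> X = {ths + c - t<..<ths + c}" using t by (auto simp: Iv_def X_def)
    also have "emeasure lborel {ths + c - t<..<ths + c} / ennreal (2 * c) = ennreal (t / (2 * c))"
      using t c_pos by (simp add: divide_ennreal)
    finally show ?thesis using t c_pos by (simp add: p.emeasure_eq_measure)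
  qed
  have "measure P (\<Union>i<n. {x\<in>space P. x i \<in> X}) \<le> (\<Sum>i<n. measure P {x\<in>space P. x i \<in> X})"
    by (rule p.finite_measure_subadditive_finite) (auto simp: X_def)
  then show ?thesis unfolding eq each by simp
qed

end

definition gt :: "real \<Rightarrow> real \<Rightarrow> nat \<Rightarrow> real" where
  "gt \<nu> \<rho> j = 16^j * (1 / \<rho>^j) * Gamma (\<nu> + real j + 1) / fact (j + 1)"

lemma gt_nonneg: "\<nu> > 0 \<Longrightarrow> \<rho> > 0 \<Longrightarrow> gt \<nu> \<rho> j \<ge> 0"
  unfolding gt_def by (intro divide_nonneg_nonneg mult_nonneg_nonneg less_imp_le[OF Gamma_real_pos]) auto

lemma gt_step:
  assumes "\<nu> > 0" "\<rho> > 0"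
  shows "gt \<nu> \<rho> (Suc j) = gt \<nu> \<rho> j * ((16 / \<rho>) * ((\<nu> + real j + 1) / (real j + 2)))"
proof -
  have G: "Gamma (\<nu> + real (Suc j) + 1) = (\<nu> + real j + 1) * Gamma (\<nu> + real j + 1)"
  proof -
    have "\<nu> + real j + 1 \<notin> \<int>\<^sub>\<le>\<^sub>0" using assms by (auto dest: nonpos_Ints_nonpos)
    from Gamma_plus1[OF this] show ?thesis by (simp add: add_ac)
  qed
  have F: "(fact (Suc j + 1) :: real) = (real j + 2) * fact (j + 1)"
    by (simp add: algebra_simps)
  show ?thesis unfolding gt_def G F using assms by (simp add: field_simps)
qed

lemma gt_summable:
  assumes "\<nu> > 0" "\<rho> \<ge> 38"
  shows "summable (gt \<nu> \<rho>)"
proof (rule summable_ratio_test[where c = "32 / \<rho>" and N = "nat \<lceil>\<nu>\<rceil>"])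
  show "32 / \<rho> < 1" using assms by simp
  fix j assume j: "j \<ge> nat \<lceil>\<nu>\<rceil>"
  have \<rho>: "\<rho> > 0" using assms by simp
  have "\<nu> \<le> real j" using j by linarith
  then have r: "(\<nu> + real j + 1) / (real j + 2) \<le> 2" by (simp add: divide_le_eq)
  have r0: "(\<nu> + real j + 1) / (real j + 2) \<ge> 0" using assms by simp
  have "gt \<nu> \<rho> (Suc j) \<le> gt \<nu> \<rho> j * ((16 / \<rho>) * 2)"
    unfolding gt_step[OF assms(1) \<rho>]
    by (intro mult_left_mono gt_nonneg assms(1) \<rho> r) (use \<rho> in auto)
  also have "\<dots> = 32 / \<rho> * gt \<nu> \<rho> j" by simp
  finally show "norm (gt \<nu> \<rho> (Suc j)) \<le> 32 / \<rho> * norm (gt \<nu> \<rho> j)"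
    using gt_nonneg[OF assms(1) \<rho>] by simp
qed

lemma sum_shift_le:
  fixes g :: "nat \<Rightarrow> real"
  assumes "\<And>j. g j \<ge> 0"
  shows "(\<Sum>r\<in>{2..n}. g (r - 1)) \<le> (\<Sum>j<n. g j)"
proof -
  have "(\<Sum>r\<in>{2..n}. g (r - 1)) = (\<Sum>j\<in>(\<lambda>r. r - 1) ` {2..n}. g j)"
    by (rule sum.reindex[symmetric, unfolded comp_def]) (auto simp: inj_on_def)
  also have "\<dots> \<le> (\<Sum>j<n. g j)"
    by (rule sum_mono2) (use assms in auto)
  finally show ?thesis .
qed

lemma geom_part:
  fixes q :: real
  assumes q: "0 \<le> q" "q \<le> 1/2"
  shows "(\<Sum>r\<in>{2..n}. q^(r-1) / fact r) \<le> 4 * q"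
proof -
  have "(\<Sum>r\<in>{2..n}. q^(r-1) / fact r) \<le> (\<Sum>r\<in>{2..n}. 2 * q * (1/2)^(r-1))"
  proof (rule sum_mono)
    fix r assume r: "r \<in> {2..n}"
    then have e: "r - 1 = Suc (r - 2)" by auto
    have "q^(r-1) / fact r \<le> q^(r-1)" using q by (simp add: divide_le_eq fact_ge_1 mult_le_cancel_left1)
    also have "q^(r-1) = q * q^(r-2)" unfolding e by simp
    also have "\<dots> \<le> q * (1/2)^(r-2)" using q by (intro mult_left_mono power_mono) auto
    also have "\<dots> = 2 * q * (1/2)^(r-1)" unfolding e by simp
    finally show "q^(r-1) / fact r \<le> 2 * q * (1/2)^(r-1)" .
  qed
  also have "\<dots> \<le> (\<Sum>j<n. 2 * q * (1/2)^j)"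
    by (rule sum_shift_le[of "\<lambda>j. 2 * q * (1/2)^j"]) (use q in simp)
  also have "\<dots> = 2 * q * (\<Sum>j<n. (1/2)^j)" by (simp add: sum_distrib_left)
  also have "(\<Sum>j<n. (1/2::real)^j) \<le> 2"
    by (simp add: sum_gp_strict)
  then have "2 * q * (\<Sum>j<n. (1/2::real)^j) \<le> 2 * q * 2" using q by (intro mult_left_mono) auto
  finally show ?thesis by simp
qed

lemma alg_c1:
  fixes F N X Xn I1 Kk FR Sx :: real
  assumes "F > 0" "N > 0" "X > 0" "Xn > 0" "I1 > 0" "Kk > 0" "FR > 0"
  shows "(N * F) * 2 * Sx / (FR * N^2) / Xn = ((I1 * F * (X / (N * Kk)) / (X * Xn)) * 2 * Kk / I1) * (Sx / FR)"
  using assms by (simp add: divide_simps power2_eq_square)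

lemma alg2:
  fixes A I1 Qa D G L2K M :: real
  assumes "I1 > 0" "Qa > 0"
  shows "(A * I1 + (1/Qa) * (D * G)) * ((L2K / I1) * M) = L2K * (A * M) + L2K * (D / (I1 * Qa)) * (G * M)"
  using assms by (simp add: divide_simps) (simp add: algebra_simps)

context setting
begin

lemma post_meas[measurable]: "(\<lambda>\<omega>. dpm_post prior (unif_kernel c) (unif_dens ths c) n \<omega> s) \<in> borel_measurable P"
  unfolding dpm_post_def W_eq by measurable

lemma main_bound:
  fixes prior :: "real \<Rightarrow> real" and D \<nu> \<rho> \<epsilon> Kk a0 PBv :: real and n :: nat
  assumes pm: "prior \<in> borel_measurable borel" and pnn: "\<And>a. 0 \<le> prior a"
    and p0: "\<And>a. a \<le> 0 \<Longrightarrow> prior a = 0" and p1: "(\<integral>\<^sup>+ a. ennreal (prior a) \<partial>lborel) = 1"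
    and D: "D > 0" and \<nu>: "\<nu> > 0" and \<rho>: "\<rho> \<ge> 38"
    and A3: "\<And>s::nat. s \<ge> 1 \<Longrightarrow> (\<integral>\<^sup>+ a. ennreal (a ^ s * prior a) \<partial>lborel) < ennreal (D * (1 / \<rho> ^ s) * Gamma (\<nu> + real s + 1))"
    and \<epsilon>: "\<epsilon> > 0" and Kk: "Kk \<ge> 1" and a0: "0 < a0" "a0 \<le> 1/32" and n: "n \<ge> 2"
    and PB: "PBv = enn2real (\<integral>\<^sup>+\<alpha>. ennreal (indicator {0<..a0/2} \<alpha> * prior \<alpha>) \<partial>lborel)" "PBv > 0"
  shows "measure P {\<omega>\<in>space P. \<epsilon> < \<bar>dpm_post prior (unif_kernel c) (unif_dens ths c) n \<omega> 1 - 1\<bar>}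
          \<le> 1/Kk + (2*Kk/\<epsilon>) * (64*a0 + (Qf (a0/2) n / Qf a0 n) * (D / PBv) * suminf (gt \<nu> \<rho>))"
proof -
  interpret p: prob_space P by (rule prob_P)
  define b where "b = a0/2"
  have b: "0 < b" "b < a0" using a0 by (auto simp: b_def)
  have n1: "n \<ge> 1" using n by simp
  have rho0: "\<rho> > 0" using \<rho> by simp
  define t where "t = 2*c/(real n * Kk)"
  have nK: "real n * Kk \<ge> 2"
  proof -
    have "real n \<ge> 2" using n by simp
    then have "real n * Kk \<ge> 2 * 1" using Kk by (intro mult_mono) auto
    then show ?thesis by simp
  qed
  have t: "0 < t" "t \<le> c"
  proof -
    show "0 < t" using c_pos nK by (simp add: t_def)
    have "2 * c \<le> c * (real n * Kk)" using c_pos nK by (simp add: mult_left_mono[of 2 _ c, simplified] mult.commute)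
    then show "t \<le> c" using nK unfolding t_def by (simp add: divide_le_eq)
  qed
  define J where "J s = (\<integral>\<^sup>+\<alpha>. ennreal (fI prior n s \<alpha>) \<partial>lborel)" for s
  have Iint_J: "Iint prior n s = enn2real (J s)" for s
    unfolding Iint_def J_def by (rule Iint_eq[OF pm pnn])
  have Iint_nonneg: "Iint prior n s \<ge> 0" for s by (simp add: Iint_J)
  define I1 where "I1 = Iint prior n 1"
  have J1fin: "J 1 \<le> 1" unfolding J_def by (rule I1_finite[OF n1 pm pnn p1])
  have J1_eq: "J 1 = ennreal I1"
    using J1fin unfolding I1_def Iint_J by (simp add: ennreal_enn2real_if) (auto simp: top_unique)
  have PBint: "(\<integral>\<^sup>+\<alpha>. ennreal (indicator {0<..b} \<alpha> * prior \<alpha>) \<partial>lborel) = ennreal PBv"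
  proof -
    have "(\<integral>\<^sup>+\<alpha>. ennreal (indicator {0<..b} \<alpha> * prior \<alpha>) \<partial>lborel) \<le> (\<integral>\<^sup>+\<alpha>. ennreal (prior \<alpha>) \<partial>lborel)"
      by (intro nn_integral_mono ennreal_leI) (auto simp: indicator_def pnn)
    then have "(\<integral>\<^sup>+\<alpha>. ennreal (indicator {0<..b} \<alpha> * prior \<alpha>) \<partial>lborel) \<noteq> top" using p1 by (auto simp: top_unique)
    then show ?thesis unfolding PB(1) b_def by (simp add: ennreal_enn2real_if)
  qed
  have I1_lb: "I1 \<ge> PBv / Qf b n"
  proof -
    have "ennreal (PBv / Qf b n) = ennreal (1 / Qf b n) * ennreal PBv"
      using PB(2) Qf_pos[of b n] b by (simp add: ennreal_mult[symmetric])
    also have "\<dots> \<le> J 1" unfolding J_def PBint[symmetric] by (rule I1_lower[OF n1 b(1) pm pnn])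
    finally have "ennreal (PBv / Qf b n) \<le> ennreal I1" using J1_eq by simp
    moreover have "I1 \<ge> 0" unfolding I1_def by (rule Iint_nonneg)
    ultimately show ?thesis using ennreal_le_iff[of I1 "PBv / Qf b n"] by simp
  qed
  have Qb: "Qf b n > 0" using Qf_pos[of b n] b by simp
  have I1_pos: "I1 > 0"
  proof -
    have "PBv / Qf b n > 0" using PB(2) Qb by simp
    then show ?thesis using I1_lb by linarith
  qed
  have Is_ub: "Iint prior n s \<le> a0^(s-1) * I1 + (1 / Qf a0 n) * (D * (1 / \<rho>^(s-1)) * Gamma (\<nu> + real (s-1) + 1))"
    if s: "s \<ge> 2" for s
  proof -
    have G0: "D * (1 / \<rho>^(s-1)) * Gamma (\<nu> + real (s-1) + 1) \<ge> 0"
      using D rho0 \<nu> by (intro mult_nonneg_nonneg less_imp_le[OF Gamma_real_pos]) auto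
    have q0: "1 / Qf a0 n \<ge> 0" using Qf_pos[of a0 n] a0 by simp
    have "J s \<le> ennreal (a0^(s-1)) * J 1 + ennreal (1 / Qf a0 n) * (\<integral>\<^sup>+\<alpha>. ennreal (\<alpha>^(s-1) * prior \<alpha>) \<partial>lborel)"
      unfolding J_def by (rule Is_upper[OF n1 s a0(1) pm pnn p0])
    also have "\<dots> \<le> ennreal (a0^(s-1)) * ennreal I1 + ennreal (1 / Qf a0 n) * ennreal (D * (1 / \<rho>^(s-1)) * Gamma (\<nu> + real (s-1) + 1))"
      unfolding J1_eq using A3[of "s-1"] s a0 Qf_pos[of a0 n] by (intro add_mono mult_left_mono order.refl less_imp_le) auto
    also have "\<dots> = ennreal (a0^(s-1) * I1) + ennreal ((1 / Qf a0 n) * (D * (1 / \<rho>^(s-1)) * Gamma (\<nu> + real (s-1) + 1)))"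
      using a0 I1_pos G0 q0 by (simp only: ennreal_mult[symmetric] zero_le_power less_imp_le)
    also have "\<dots> = ennreal (a0^(s-1) * I1 + (1 / Qf a0 n) * (D * (1 / \<rho>^(s-1)) * Gamma (\<nu> + real (s-1) + 1)))"
      by (rule ennreal_plus[symmetric]) (use a0 I1_pos mult_nonneg_nonneg[OF q0 G0] in auto)
    finally show ?thesis unfolding Iint_J
      by (intro enn2real_leI) (use a0 I1_pos mult_nonneg_nonneg[OF q0 G0] in auto)
  qed
  define W1 where "W1 \<omega> = I1 * Sm n \<omega> 1" for \<omega>
  define Y where "Y \<omega> = (\<Sum>r\<in>{2..n}. Iint prior n r * Sm n \<omega> r)" for \<omega>
  have Y_nn: "Y \<omega> \<ge> 0" for \<omega> unfolding Y_def by (intro sum_nonneg mult_nonneg_nonneg Iint_nonneg Sm_nonneg)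
  have Y_meas[measurable]: "Y \<in> borel_measurable P" unfolding Y_def by measurable
  have post_eq: "dpm_post prior (unif_kernel c) (unif_dens ths c) n \<omega> 1 = W1 \<omega> / (W1 \<omega> + Y \<omega>)" for \<omega>
  proof -
    have "{1..n} = insert 1 {2..n}" using n by auto
    then show ?thesis unfolding dpm_post_def W_eq W1_def Y_def I1_def by simp
  qed
  define L where "L = I1 * fact (n-1) * t / (2*c)^(n+1)"
  have L: "L > 0" using I1_pos t c_pos by (simp add: L_def)
  have W1_G: "W1 \<omega> \<ge> L" if G: "\<forall>i<n. ths - c < \<omega> i \<and> \<omega> i \<le> ths + c - t" for \<omega>
  proof -
    have "Hr \<omega> {..<n} \<ge> t" by (rule Hr_G[OF t G])
    then have "fact (n-1) * t / (2*c)^(n+1) \<le> fact (n-1) * Hr \<omega> {..<n} / (2*c)^(n+1)"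
      using c_pos by (intro divide_right_mono mult_left_mono) auto
    then have "I1 * (fact (n-1) * t / (2*c)^(n+1)) \<le> I1 * (fact (n-1) * Hr \<omega> {..<n} / (2*c)^(n+1))"
      using I1_pos by (intro mult_left_mono) auto
    then show ?thesis unfolding W1_def L_def Sm_one[OF n1] by (simp add: mult.assoc)
  qed
  define Gs where "Gs = {\<omega> \<in> space P. \<not> (\<forall>i<n. ths - c < \<omega> i \<and> \<omega> i \<le> ths + c - t)}"
  define Bs where "Bs = {\<omega> \<in> space P. \<epsilon> * L \<le> Y \<omega>}"
  have Gs_meas: "Gs \<in> sets P" unfolding Gs_def by measurable
  have Bs_meas: "Bs \<in> sets P" unfolding Bs_def by measurable
  have sub: "{\<omega>\<in>space P. \<epsilon> < \<bar>dpm_post prior (unif_kernel c) (unif_dens ths c) n \<omega> 1 - 1\<bar>} \<subseteq> Gs \<union> Bs"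
  proof
    fix \<omega> assume \<omega>: "\<omega> \<in> {\<omega>\<in>space P. \<epsilon> < \<bar>dpm_post prior (unif_kernel c) (unif_dens ths c) n \<omega> 1 - 1\<bar>}"
    show "\<omega> \<in> Gs \<union> Bs"
    proof (cases "\<omega> \<in> Gs")
      case False
      then have G: "\<forall>i<n. ths - c < \<omega> i \<and> \<omega> i \<le> ths + c - t" using \<omega> by (simp add: Gs_def)
      have W: "W1 \<omega> \<ge> L" by (rule W1_G[OF G])
      have Wp: "W1 \<omega> > 0" using W L by linarith
      have "\<bar>W1 \<omega> / (W1 \<omega> + Y \<omega>) - 1\<bar> = Y \<omega> / (W1 \<omega> + Y \<omega>)"
        using Wp Y_nn[of \<omega>] by (simp add: field_simps)
      also have "\<dots> \<le> Y \<omega> / W1 \<omega>" using Wp Y_nn[of \<omega>] by (intro divide_left_mono) auto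
      also have "\<dots> \<le> Y \<omega> / L" using W L Y_nn[of \<omega>] by (intro divide_left_mono) auto
      finally have "\<epsilon> < Y \<omega> / L" using \<omega> post_eq[of \<omega>] by simp
      then have "\<epsilon> * L \<le> Y \<omega>" using L by (simp add: pos_less_divide_eq less_imp_le)
      then show ?thesis using \<omega> by (simp add: Bs_def)
    qed simp
  qed
  define R where "R = (Qf b n / Qf a0 n) * (D / PBv)"
  have R: "R \<ge> 0" using Qf_pos[of b n] Qf_pos[of a0 n] b a0 D PB(2) by (simp add: R_def)
  define Eb where "Eb = (\<Sum>r\<in>{2..n}. Iint prior n r * (bnd r n / (2*c)^n))"
  have Eb0: "Eb \<ge> 0" unfolding Eb_def using c_pos
    by (intro sum_nonneg mult_nonneg_nonneg Iint_nonneg divide_nonneg_nonneg) (auto simp: bnd_def)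
  have E_Y: "(\<integral>\<^sup>+\<omega>. ennreal (Y \<omega>) \<partial>P) \<le> ennreal Eb"
  proof -
    have "(\<integral>\<^sup>+\<omega>. ennreal (Y \<omega>) \<partial>P) = (\<integral>\<^sup>+\<omega>. (\<Sum>r\<in>{2..n}. ennreal (Iint prior n r) * ennreal (Sm n \<omega> r)) \<partial>P)"
      unfolding Y_def by (intro nn_integral_cong)
        (simp add: sum_ennreal[symmetric] mult_nonneg_nonneg Iint_nonneg Sm_nonneg ennreal_mult del: sum_ennreal)
    also have "\<dots> = (\<Sum>r\<in>{2..n}. \<integral>\<^sup>+\<omega>. ennreal (Iint prior n r) * ennreal (Sm n \<omega> r) \<partial>P)"
      by (rule nn_integral_sum) auto
    also have "\<dots> = (\<Sum>r\<in>{2..n}. ennreal (Iint prior n r) * \<integral>\<^sup>+\<omega>. ennreal (Sm n \<omega> r) \<partial>P)"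
      by (intro sum.cong refl nn_integral_cmult) auto
    also have "\<dots> \<le> (\<Sum>r\<in>{2..n}. ennreal (Iint prior n r) * ennreal (bnd r n / (2*c)^n))"
      by (intro sum_mono mult_left_mono E_Sm) auto
    also have "\<dots> = ennreal Eb" unfolding Eb_def
      using c_pos by (simp add: ennreal_mult[symmetric] Iint_nonneg bnd_def mult_nonneg_nonneg)
    finally show ?thesis .
  qed
  have termb: "Iint prior n r * (bnd r n / (2*c)^n) \<le> (L*2*Kk) * ((16*a0)^(r-1) / fact r) + (L*2*Kk) * R * gt \<nu> \<rho> (r-1)"
    if r: "r \<in> {2..n}" for r
  proof -
    define M where "M = 16^(r-1) / (fact r :: real)"
    define G where "G = (1 / \<rho>^(r-1)) * Gamma (\<nu> + real (r-1) + 1)"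
    define Qa where "Qa = Qf a0 n"
    have Qa: "Qa > 0" using Qf_pos[of a0 n] a0 by (simp add: Qa_def)
    have M0: "M \<ge> 0" by (simp add: M_def)
    have G0: "G \<ge> 0" using rho0 \<nu> by (simp add: G_def less_imp_le[OF Gamma_real_pos])
    have fn: "(fact n :: real) = real n * fact (n - 1)" by (rule fact_reduce) (use n in auto)
    have pw: "(2*c)^(n+1) = (2*c) * (2*c)^n" by simp
    have c1: "bnd r n / (2*c)^n = ((L*2*Kk) / I1) * M"
      unfolding bnd_def L_def t_def M_def fn pw
      by (rule alg_c1) (use I1_pos c_pos Kk n in auto)
    have L2K: "L*2*Kk \<ge> 0" using L Kk by simp
    have "Iint prior n r * (bnd r n / (2*c)^n) \<le> (a0^(r-1) * I1 + (1/Qa) * (D * G)) * (((L*2*Kk) / I1) * M)"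
    proof -
      have LM: "((L*2*Kk) / I1) * M \<ge> 0" using L2K I1_pos M0 by simp
      have "Iint prior n r \<le> a0^(r-1) * I1 + (1/Qa) * (D * G)"
        using Is_ub[of r] r by (simp add: Qa_def G_def mult.assoc)
      then show ?thesis unfolding c1 using LM by (rule mult_right_mono)
    qed
    also have "\<dots> = (L*2*Kk) * (a0^(r-1) * M) + (L*2*Kk) * (D / (I1 * Qa)) * (G * M)"
      by (rule alg2[OF I1_pos Qa])
    also have "a0^(r-1) * M = (16*a0)^(r-1) / fact r" by (simp add: M_def power_mult_distrib)
    also have "G * M = gt \<nu> \<rho> (r-1)" using r by (simp add: G_def M_def gt_def)
    also have "D / (I1 * Qa) \<le> R"
    proof -
      have "1 / I1 \<le> Qf b n / PBv" using I1_lb I1_pos PB(2) Qb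
        by (simp add: divide_simps) (simp add: mult.commute)
      then have "D * (1 / I1) / Qa \<le> D * (Qf b n / PBv) / Qa" using D Qa
        by (intro divide_right_mono mult_left_mono) auto
      then show ?thesis by (simp add: R_def Qa_def field_simps)
    qed
    then have "(L*2*Kk) * (D / (I1 * Qa)) * gt \<nu> \<rho> (r-1) \<le> (L*2*Kk) * R * gt \<nu> \<rho> (r-1)"
      using L2K gt_nonneg[OF \<nu> rho0] by (intro mult_right_mono mult_left_mono) auto
    finally show ?thesis by simp
  qed
  have Eb_le: "Eb \<le> (L*2*Kk) * (64*a0 + R * suminf (gt \<nu> \<rho>))"
  proof -
    define S1 where "S1 = (\<Sum>r\<in>{2..n}. (16*a0)^(r-1) / fact r)"
    define S2 where "S2 = (\<Sum>r\<in>{2..n}. gt \<nu> \<rho> (r-1))"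
    have s1: "S1 \<le> 64 * a0" unfolding S1_def using geom_part[of "16*a0" n] a0 by simp
    have "S2 \<le> (\<Sum>j<n. gt \<nu> \<rho> j)" unfolding S2_def
      by (rule sum_shift_le) (rule gt_nonneg[OF \<nu> rho0])
    also have "(\<Sum>j<n. gt \<nu> \<rho> j) \<le> suminf (gt \<nu> \<rho>)"
      by (rule sum_le_suminf[OF gt_summable[OF \<nu> \<rho>]]) (auto intro: gt_nonneg[OF \<nu> rho0])
    finally have s2: "S2 \<le> suminf (gt \<nu> \<rho>)" .
    have L2K: "L*2*Kk \<ge> 0" using L Kk by simp
    have "Eb \<le> (\<Sum>r\<in>{2..n}. (L*2*Kk) * ((16*a0)^(r-1) / fact r) + (L*2*Kk) * R * gt \<nu> \<rho> (r-1))"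
      unfolding Eb_def by (rule sum_mono) (rule termb)
    also have "\<dots> = (L*2*Kk) * S1 + (L*2*Kk) * R * S2"
      by (simp add: sum.distrib sum_distrib_left S1_def S2_def)
    also have "\<dots> \<le> (L*2*Kk) * (64*a0) + (L*2*Kk) * R * suminf (gt \<nu> \<rho>)"
      using L2K R s1 s2 L Kk by (intro add_mono mult_left_mono mult_nonneg_nonneg) auto
    also have "\<dots> = (L*2*Kk) * (64*a0 + R * suminf (gt \<nu> \<rho>))" by (simp add: algebra_simps)
    finally show ?thesis .
  qed
  have "measure P {\<omega>\<in>space P. \<epsilon> < \<bar>dpm_post prior (unif_kernel c) (unif_dens ths c) n \<omega> 1 - 1\<bar>} \<le> measure P (Gs \<union> Bs)"
    by (rule p.finite_measure_mono[OF sub]) (use Gs_meas Bs_meas in auto)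
  also have "\<dots> \<le> measure P Gs + measure P Bs"
    by (rule measure_subadditive[OF Gs_meas Bs_meas]) (auto simp: p.emeasure_eq_measure)
  also have "measure P Gs \<le> 1 / Kk"
  proof -
    have "measure P Gs \<le> real n * (t / (2 * c))" unfolding Gs_def by (rule measure_Gc[OF t])
    also have "\<dots> = 1 / Kk" using c_pos n by (simp add: t_def field_simps)
    finally show ?thesis .
  qed
  also have "measure P Bs \<le> Eb / (\<epsilon> * L)"
    unfolding Bs_def using prob_P Y_meas Y_nn _ E_Y
    by (rule markov_nn) (use \<epsilon> L E_Y Eb0 in \<open>auto intro: mult_pos_pos\<close>)
  also have "Eb / (\<epsilon> * L) \<le> (L*2*Kk) * (64*a0 + R * suminf (gt \<nu> \<rho>)) / (\<epsilon> * L)"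
    using Eb_le \<epsilon> L by (intro divide_right_mono) auto
  also have "\<dots> = (2*Kk/\<epsilon>) * (64*a0 + R * suminf (gt \<nu> \<rho>))"
    using L \<epsilon> by (simp add: field_simps)
  finally show ?thesis by (simp add: R_def b_def)
qed

end

theorem theorem2:
  fixes \<theta>s c :: real and prior :: "real \<Rightarrow> real"
  assumes c_pos: "c > 0"
    and A1: "prior \<in> borel_measurable borel" "\<And>a. 0 \<le> prior a" "\<And>a. a \<le> 0 \<Longrightarrow> prior a = 0"
            "(\<integral>\<^sup>+ a. ennreal (prior a) \<partial>lborel) = 1"
    and A2: "\<exists>\<epsilon> \<delta> \<beta>::real. \<epsilon> > 0 \<and> \<delta> > 0 \<and>
               (\<forall>a\<in>{0<..<\<epsilon>}. (1 / \<delta>) * a powr \<beta> \<le> prior a \<and> prior a \<le> \<delta> * a powr \<beta>)"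
    and A3: "\<exists>D \<nu> \<rho>::real. D > 0 \<and> \<nu> > 0 \<and> \<rho> \<ge> 38 \<and>
               (\<forall>s::nat. s \<ge> 1 \<longrightarrow>
                  (\<integral>\<^sup>+ a. ennreal (a ^ s * prior a) \<partial>lborel)
                    < ennreal (D * (1 / \<rho> ^ s) * Gamma (\<nu> + real s + 1)))"
  defines "P \<equiv> PiM (UNIV :: nat set) (\<lambda>_. uniform_measure lborel {\<theta>s - c<..<\<theta>s + c})"
  shows "(\<forall>n \<epsilon>. {\<omega> \<in> space P.
              \<bar>dpm_post prior (unif_kernel c) (unif_dens \<theta>s c) n \<omega> 1 - 1\<bar> > \<epsilon>} \<in> sets P)
       \<and> (\<forall>\<epsilon>>0. (\<lambda>n. measure P {\<omega> \<in> space P.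
              \<bar>dpm_post prior (unif_kernel c) (unif_dens \<theta>s c) n \<omega> 1 - 1\<bar> > \<epsilon>})
              \<longlonglongrightarrow> 0)"
proof -
  obtain D \<nu> \<rho> :: real where D: "D > 0" and \<nu>: "\<nu> > 0" and \<rho>: "\<rho> \<ge> 38"
    and A3': "\<And>s::nat. s \<ge> 1 \<Longrightarrow> (\<integral>\<^sup>+ a. ennreal (a ^ s * prior a) \<partial>lborel)
                    < ennreal (D * (1 / \<rho> ^ s) * Gamma (\<nu> + real s + 1))"
    using A3 by blast
  interpret S: setting \<theta>s c by unfold_locales (rule c_pos)
  have P_eq: "P = S.P" by (simp add: P_def S.P_def S.U_def S.Iv_def)
  interpret p: prob_space P unfolding P_eq by (rule S.prob_P)
  have meas: "(\<lambda>\<omega>. dpm_post prior (unif_kernel c) (unif_dens \<theta>s c) n \<omega> 1) \<in> borel_measurable P" for n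
    unfolding P_eq by (rule S.post_meas)
  show ?thesis
  proof (intro conjI allI impI)
    fix n :: nat and \<epsilon> :: real
    show "{\<omega> \<in> space P. \<bar>dpm_post prior (unif_kernel c) (unif_dens \<theta>s c) n \<omega> 1 - 1\<bar> > \<epsilon>} \<in> sets P"
      using meas[of n] by measurable
  next
    fix \<epsilon> :: real assume \<epsilon>: "\<epsilon> > 0"
    define \<mu> where "\<mu> n = measure P {\<omega> \<in> space P. \<bar>dpm_post prior (unif_kernel c) (unif_dens \<theta>s c) n \<omega> 1 - 1\<bar> > \<epsilon>}" for n
    have "\<mu> \<longlonglongrightarrow> 0"
    proof (rule LIMSEQ_I)
      fix r :: real assume r: "r > 0"
      define Kk where "Kk = 3 / r + 1"
      have Kk: "Kk \<ge> 1" using r by (simp add: Kk_def)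
      have Kk3: "1 / Kk < r / 3"
      proof -
        have "3 / r < Kk" by (simp add: Kk_def)
        then have "3 < Kk * r" using r by (simp add: divide_less_eq)
        then show ?thesis using r Kk by (simp add: divide_less_eq field_simps)
      qed
      define a0 where "a0 = min (1/32) (r * \<epsilon> / (384 * Kk))"
      have a0: "0 < a0" "a0 \<le> 1/32" using r \<epsilon> Kk by (auto simp: a0_def)
      have a0b: "(2 * Kk / \<epsilon>) * (64 * a0) \<le> r / 3"
      proof -
        have "a0 \<le> r * \<epsilon> / (384 * Kk)" by (simp add: a0_def)
        then have "(2 * Kk / \<epsilon>) * (64 * a0) \<le> (2 * Kk / \<epsilon>) * (64 * (r * \<epsilon> / (384 * Kk)))"
          using Kk \<epsilon> by (intro mult_left_mono) auto
        also have "\<dots> = r / 3" using Kk \<epsilon> by (simp add: field_simps)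
        finally show ?thesis .
      qed
      define PBv where "PBv = enn2real (\<integral>\<^sup>+\<alpha>. ennreal (indicator {0<..a0/2} \<alpha> * prior \<alpha>) \<partial>lborel)"
      have PB: "PBv > 0"
      proof -
        have pos: "(\<integral>\<^sup>+\<alpha>. ennreal (indicator {0<..a0/2} \<alpha> * prior \<alpha>) \<partial>lborel) > 0"
          by (rule prior_pos_int[OF _ A1(1) A1(2) A2]) (use a0 in simp)
        have "(\<integral>\<^sup>+\<alpha>. ennreal (indicator {0<..a0/2} \<alpha> * prior \<alpha>) \<partial>lborel) \<le> (\<integral>\<^sup>+\<alpha>. ennreal (prior \<alpha>) \<partial>lborel)"
          by (intro nn_integral_mono ennreal_leI) (auto simp: indicator_def A1(2))
        then have "(\<integral>\<^sup>+\<alpha>. ennreal (indicator {0<..a0/2} \<alpha> * prior \<alpha>) \<partial>lborel) < top"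
          using A1(4) by (simp add: order_le_less_trans)
        then show ?thesis using pos by (simp add: PBv_def enn2real_positive_iff)
      qed
      define C where "C = (2 * Kk / \<epsilon>) * (D / PBv) * suminf (gt \<nu> \<rho>)"
      have "(\<lambda>n. C * (Qf (a0/2) n / Qf a0 n)) \<longlonglongrightarrow> C * 0"
        by (intro tendsto_mult tendsto_const Qf_ratio_tendsto) (use a0 in auto)
      then have "eventually (\<lambda>n. C * (Qf (a0/2) n / Qf a0 n) < r / 3) sequentially"
        using r by (intro order_tendstoD(2)) auto
      moreover have "eventually (\<lambda>n. n \<ge> 2) sequentially" by (rule eventually_ge_at_top)
      ultimately have "eventually (\<lambda>n. norm (\<mu> n - 0) < r) sequentially"
      proof eventually_elim
        case (elim n)
        have "\<mu> n \<le> 1/Kk + (2*Kk/\<epsilon>) * (64*a0 + (Qf (a0/2) n / Qf a0 n) * (D / PBv) * suminf (gt \<nu> \<rho>))"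
          unfolding \<mu>_def P_eq
          by (rule S.main_bound[OF A1 D \<nu> \<rho> A3' \<epsilon> Kk a0 elim(2) PBv_def PB]) simp
        also have "\<dots> = 1/Kk + (2*Kk/\<epsilon>) * (64*a0) + C * (Qf (a0/2) n / Qf a0 n)"
          by (simp add: C_def algebra_simps)
        also have "\<dots> < r/3 + r/3 + r/3"
          using Kk3 a0b elim(1) by linarith
        finally have "\<mu> n < r" by simp
        moreover have "\<mu> n \<ge> 0" by (simp add: \<mu>_def)
        ultimately show ?case by simp
      qed
      then show "\<exists>no. \<forall>n\<ge>no. norm (\<mu> n - 0) < r" by (simp add: eventually_sequentially)
    qed
    then show "(\<lambda>n. measure P {\<omega> \<in> space P. \<bar>dpm_post prior (unif_kernel c) (unif_dens \<theta>s c) n \<omega> 1 - 1\<bar> > \<epsilon>}) \<longlonglongrightarrow> 0"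
      by (simp add: \<mu>_def[abs_def])
  qed
qed

end
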